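(* Let $L>0$ and $m>0$. Let $a:[-L,L]\to\mathbb{R}$ be a positive even function of class $C^1([-L,L])$, and let $G:\mathbb{R}\to\mathbb{R}$ be a nonnegative even $C^1$ function such that $f:=-G'$ is locally Lipschitz. Suppose that $$a'\ge 0 \text{ in } (0,L),\qquad G\ge G(m)\text{ in }(0,\infty),\qquad G'\le 0 \text{ in }(0,m).$$ Then the problem $$-(a u')' = a\, f(u)\ \text{ in } (-L,L),\qquad u(L)=-u(-L)=m,$$ admits a unique solution, which is therefore odd. Furthermore, this solution is increasing.
   Context: A solution is a function $u\in H^1((-L,L))$ (hence continuous on $[-L,L]$) satisfying the equation in the weak sense and the boundary conditions; such solutions are $C^2$ in $(-L,L)$ and satisfy the equation pointwise. *)

theory Defs
  imports "HOL-Analysis.Analysis"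
begin

definition loc_lipschitz :: "(real \<Rightarrow> real) \<Rightarrow> bool" where
  "loc_lipschitz f \<longleftrightarrow> (\<forall>x. \<exists>e>0. \<exists>K. K-lipschitz_on (ball x e) f)"

definition is_solution ::
  "real \<Rightarrow> real \<Rightarrow> (real \<Rightarrow> real) \<Rightarrow> (real \<Rightarrow> real) \<Rightarrow> (real \<Rightarrow> real) \<Rightarrow> bool" where
  "is_solution L m a f u \<longleftrightarrow>
     continuous_on {-L..L} u \<and> u L = m \<and> u (-L) = - m \<and>
     (\<exists>u'. (\<forall>x\<in>{-L<..<L}. (u has_real_derivative u' x) (at x)) \<and>
           (\<forall>x\<in>{-L<..<L}. ((\<lambda>y. a y * u' y) has_real_derivative (- (a x * f (u x)))) (at x)))"

end

theory Submission
  imports Defs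
begin

locale prob =
  fixes L m :: real and a a' G g :: "real \<Rightarrow> real"
  assumes L_pos: "L > 0" and m_pos: "m > 0"
    and a_pos: "\<forall>x\<in>{-L..L}. a x > 0"
    and a_even: "\<forall>x\<in>{-L..L}. a (- x) = a x"
    and a_deriv: "\<forall>x\<in>{-L..L}. (a has_real_derivative a' x) (at x within {-L..L})"
    and G_deriv: "\<forall>x. (G has_real_derivative g x) (at x)"
    and G_even: "\<forall>x. G (- x) = G x"
    and g_cont: "continuous_on UNIV g"
    and f_lip: "loc_lipschitz (\<lambda>x. - g x)"
    and a'_nonneg: "\<forall>x\<in>{0<..<L}. a' x \<ge> 0"
    and G_min: "\<forall>x>0. G x \<ge> G m"
    and g_nonpos: "\<forall>x\<in>{0<..<m}. g x \<le> 0"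
begin

lemma a_cont: "continuous_on {-L..L} a"
  using a_deriv by (auto simp: continuous_on_eq_continuous_within intro: DERIV_continuous)

lemma a_deriv_at: "x \<in> {-L<..<L} \<Longrightarrow> (a has_real_derivative a' x) (at x)"
proof -
  assume x: "x \<in> {-L<..<L}"
  then have "x \<in> interior {-L..L}" by simp
  then have "at x within {-L..L} = at x" by (rule at_within_interior)
  with a_deriv x show ?thesis by (metis greaterThanLessThan_iff atLeastAtMost_iff less_imp_le)
qed

lemma a_bounds: obtains \<alpha> \<beta> where "0 < \<alpha>" "\<forall>x\<in>{-L..L}. \<alpha> \<le> a x \<and> a x \<le> \<beta>"
proof -
  have ne: "{-L..L} \<noteq> {}" using L_pos by simp
  obtain x1 where x1: "x1 \<in> {-L..L}" "\<forall>y\<in>{-L..L}. a x1 \<le> a y"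
    using continuous_attains_inf[OF compact_Icc ne a_cont] by blast
  obtain x2 where x2: "x2 \<in> {-L..L}" "\<forall>y\<in>{-L..L}. a y \<le> a x2"
    using continuous_attains_sup[OF compact_Icc ne a_cont] by blast
  show ?thesis using x1 x2 a_pos by (intro that[of "a x1" "a x2"]) auto
qed

lemma a'_odd: assumes x: "x \<in> {-L<..<L}" shows "a' (- x) = - a' x"
proof -
  have mx: "- x \<in> {-L<..<L}" using x by auto
  have "((\<lambda>y. a (- y)) has_real_derivative a' (- x) * (- 1)) (at x)"
    by (rule DERIV_chain2[where f=a and g="\<lambda>y. - y"]) (use a_deriv_at[OF mx] in \<open>auto intro!: derivative_eq_intros\<close>)
  then have "((\<lambda>y. a (- y)) has_real_derivative - a' (- x)) (at x)" by simp
  then have "(a has_real_derivative - a' (- x)) (at x)"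
    by (rule has_field_derivative_transform_within_open[where S="{-L<..<L}"]) (use x a_even in auto)
  from DERIV_unique[OF this a_deriv_at[OF x]] show ?thesis by simp
qed

lemma a'_nonpos: "x \<in> {-L<..<0} \<Longrightarrow> a' x \<le> 0"
proof -
  assume x: "x \<in> {-L<..<0}"
  then have "a' (- x) \<ge> 0" using a'_nonneg by auto
  moreover have "a' (- (- x)) = - a' (- x)" using x by (intro a'_odd) auto
  ultimately show ?thesis by simp
qed

lemma a'_zero: "a' 0 = 0"
  using a'_odd[of 0] L_pos by simp

lemma a_mono: assumes "0 \<le> x" "x \<le> y" "y \<le> L" shows "a x \<le> a y"
proof -
  have "continuous_on {x..y} a" using a_cont by (rule continuous_on_subset) (use assms in auto)
  show ?thesis
    by (rule DERIV_nonneg_imp_increasing_open[OF assms(2) _ \<open>continuous_on {x..y} a\<close>])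
       (use assms a'_nonneg L_pos in \<open>auto intro!: exI[of _ "a' _"] a_deriv_at\<close>)
qed

lemma g_odd: "g (- x) = - g x"
proof -
  have "((\<lambda>y. G (- y)) has_real_derivative g (- x) * (- 1)) (at x)"
    by (rule DERIV_chain2[where f=G and g="\<lambda>y. - y"]) (use G_deriv in \<open>auto intro!: derivative_eq_intros\<close>)
  then have "(G has_real_derivative - g (- x)) (at x)" using G_even by simp
  from DERIV_unique[OF this spec[OF G_deriv, of x]] show ?thesis by simp
qed

lemma G_cont: "continuous_on UNIV G"
  using G_deriv by (auto simp: continuous_on_eq_continuous_within intro: DERIV_continuous)

lemma G_ge: "G x \<ge> G m"
proof -
  have G0: "G 0 \<ge> G m"
  proof (rule continuous_ge_on_closure[of "{0<..}" G])
    show "continuous_on (closure {0<..}) G" using G_cont continuous_on_subset by blast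
  qed (use G_min in auto)
  consider "x > 0" | "x = 0" | "x < 0" by linarith
  then show ?thesis
  proof cases
    case 3
    then show ?thesis using G_min G_even[rule_format, of x] by (metis neg_0_less_iff_less)
  qed (use G0 G_min in auto)
qed

lemma g_zero: assumes "G c = G m" shows "g c = 0"
  by (rule DERIV_local_min[OF spec[OF G_deriv, of c], of 1]) (use assms G_ge in auto)

lemma g_m: "g m = 0" by (rule g_zero) simp
lemma g_mm: "g (- m) = 0" using g_m g_odd by simp

lemma g_lip: obtains K where "K \<ge> 0" "\<And>x y. x \<in> {-R..R} \<Longrightarrow> y \<in> {-R..R} \<Longrightarrow> \<bar>g x - g y\<bar> \<le> K * \<bar>x - y\<bar>"
proof -
  have ll: "local_lipschitz {0::real} {-R..R} (\<lambda>_ x. - g x)"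
  proof (rule local_lipschitzI)
    fix t x assume "t \<in> {0::real}" "x \<in> {-R..R}"
    obtain e K where e: "e > 0" "K-lipschitz_on (ball x e) (\<lambda>x. - g x)"
      using f_lip unfolding loc_lipschitz_def by blast
    have "K-lipschitz_on (cball x (e/2) \<inter> {-R..R}) (\<lambda>x. - g x)"
      by (rule lipschitz_on_subset[OF e(2)]) (use e in \<open>auto simp: subset_iff\<close>)
    then show "\<exists>u>0. \<exists>L. \<forall>t\<in>cball t u \<inter> {0}. L-lipschitz_on (cball x u \<inter> {-R..R}) (\<lambda>x. - g x)"
      using e by (intro exI[of _ "e/2"]) auto
  qed
  obtain K where K: "\<And>t. t \<in> {0::real} \<Longrightarrow> K-lipschitz_on {-R..R} (\<lambda>x. - g x)"
    by (rule local_lipschitz_compact_implies_lipschitz[OF ll]) auto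
  then have K0: "K-lipschitz_on {-R..R} (\<lambda>x. - g x)" by simp
  show ?thesis
  proof (rule that[of K])
    show "K \<ge> 0" using K0 lipschitz_on_nonneg by blast
    fix x y assume "x \<in> {-R..R}" "y \<in> {-R..R}"
    from lipschitz_onD[OF K0 this] show "\<bar>g x - g y\<bar> \<le> K * \<bar>x - y\<bar>"
      by (simp add: dist_real_def abs_minus_commute)
  qed
qed

end


context prob begin

definition ode :: "(real \<Rightarrow> real) \<Rightarrow> (real \<Rightarrow> real) \<Rightarrow> (real \<Rightarrow> real) \<Rightarrow> bool" where
  "ode u w \<phi> \<longleftrightarrow> (\<forall>x\<in>{-L<..<L}. (u has_real_derivative w x / a x) (at x) \<and>
       (w has_real_derivative - (a x * \<phi> (u x))) (at x))"

lemma ivp_unique: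
  assumes o1: "ode u1 w1 \<phi>" and o2: "ode u2 w2 \<phi>"
    and lip: "\<forall>x\<in>{-L<..<L}. \<bar>\<phi> (u1 x) - \<phi> (u2 x)\<bar> \<le> K * \<bar>u1 x - u2 x\<bar>" and K: "K \<ge> 0"
    and x0: "x0 \<in> {-L<..<L}" and e1: "u1 x0 = u2 x0" and e2: "w1 x0 = w2 x0"
    and x: "x \<in> {-L<..<L}"
  shows "u1 x = u2 x \<and> w1 x = w2 x"
proof -
  obtain \<alpha> \<beta> where ab: "0 < \<alpha>" "\<forall>x\<in>{-L..L}. \<alpha> \<le> a x \<and> a x \<le> \<beta>" by (rule a_bounds)
  define h where "h y = (u1 y - u2 y)\<^sup>2 + (w1 y - w2 y)\<^sup>2" for y
  define H where "H y = 2 * (u1 y - u2 y) * (w1 y / a y - w2 y / a y)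
     + 2 * (w1 y - w2 y) * (- (a y * \<phi> (u1 y)) - - (a y * \<phi> (u2 y)))" for y
  define C where "C = 1 / \<alpha> + \<beta> * K"
  have hd: "(h has_real_derivative H y) (at y)" if y: "y \<in> {-L<..<L}" for y
  proof -
    have d1: "(u1 has_real_derivative w1 y / a y) (at y)" "(w1 has_real_derivative - (a y * \<phi> (u1 y))) (at y)"
      using o1 y unfolding ode_def by auto
    have d2: "(u2 has_real_derivative w2 y / a y) (at y)" "(w2 has_real_derivative - (a y * \<phi> (u2 y))) (at y)"
      using o2 y unfolding ode_def by auto
    have ay: "a y \<noteq> 0" using a_pos y by (metis atLeastAtMost_iff greaterThanLessThan_iff less_imp_le less_irrefl)
    show ?thesis unfolding h_def[abs_def] H_def
      apply (rule derivative_eq_intros d1 d2 | simp)+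
      using ay by (simp add: field_simps)
  qed
  have hb: "\<bar>H y\<bar> \<le> C * h y" if y: "y \<in> {-L<..<L}" for y
  proof -
    define p where "p = u1 y - u2 y"
    define q where "q = w1 y - w2 y"
    define r where "r = \<phi> (u1 y) - \<phi> (u2 y)"
    have ay: "\<alpha> \<le> a y" "a y \<le> \<beta>" using ab y by auto
    have apos: "a y > 0" using ay ab by simp
    have Hy: "H y = 2 * p * q / a y - 2 * q * a y * r"
      unfolding H_def p_def q_def r_def using apos by (simp add: field_simps)
    have r: "\<bar>r\<bar> \<le> K * \<bar>p\<bar>" using lip y unfolding r_def p_def by auto
    have sq: "2 * \<bar>p\<bar> * \<bar>q\<bar> \<le> p\<^sup>2 + q\<^sup>2"
      using sum_squares_bound[of "\<bar>p\<bar>" "\<bar>q\<bar>"] by (simp add: power2_eq_square)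
    have t1: "\<bar>2 * p * q / a y\<bar> \<le> (p\<^sup>2 + q\<^sup>2) / \<alpha>"
    proof -
      have "\<bar>2 * p * q / a y\<bar> = 2 * \<bar>p\<bar> * \<bar>q\<bar> / a y" using apos by (simp add: abs_mult)
      also have "\<dots> \<le> 2 * \<bar>p\<bar> * \<bar>q\<bar> / \<alpha>"
        by (rule divide_left_mono) (use ay ab in auto)
      also have "\<dots> \<le> (p\<^sup>2 + q\<^sup>2) / \<alpha>" by (rule divide_right_mono[OF sq]) (use ab in auto)
      finally show ?thesis .
    qed
    have t2: "\<bar>2 * q * a y * r\<bar> \<le> \<beta> * K * (p\<^sup>2 + q\<^sup>2)"
    proof -
      have "\<bar>2 * q * a y * r\<bar> = 2 * \<bar>q\<bar> * a y * \<bar>r\<bar>" using apos by (simp add: abs_mult)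
      also have "\<dots> \<le> 2 * \<bar>q\<bar> * \<beta> * (K * \<bar>p\<bar>)"
        by (intro mult_mono) (use ay r apos in auto)
      also have "\<dots> = \<beta> * K * (2 * \<bar>p\<bar> * \<bar>q\<bar>)" by simp
      also have "\<dots> \<le> \<beta> * K * (p\<^sup>2 + q\<^sup>2)"
        by (rule mult_left_mono[OF sq]) (use ay ab K in auto)
      finally show ?thesis .
    qed
    have "\<bar>H y\<bar> \<le> (p\<^sup>2 + q\<^sup>2) / \<alpha> + \<beta> * K * (p\<^sup>2 + q\<^sup>2)"
      unfolding Hy using t1 t2 by linarith
    also have "\<dots> = C * h y" unfolding C_def h_def p_def q_def by (simp add: algebra_simps add_divide_distrib)
    finally show ?thesis .
  qed
  have h0: "h x0 = 0" unfolding h_def using e1 e2 by simp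
  have hx: "h x \<le> 0"
  proof (cases "x0 \<le> x")
    case True
    define k where "k y = exp (- C * y) * h y" for y
    have "k x \<le> k x0"
    proof (rule DERIV_nonpos_imp_nonincreasing[OF True])
      fix y assume "x0 \<le> y" "y \<le> x"
      then have y: "y \<in> {-L<..<L}" using x0 x by auto
      have "(k has_real_derivative exp (- C * y) * (- C) * h y + exp (- C * y) * H y) (at y)"
        unfolding k_def[abs_def] by (rule derivative_eq_intros hd[OF y] | simp)+
      moreover have "exp (- C * y) * (- C) * h y + exp (- C * y) * H y \<le> 0"
      proof -
        have "exp (- C * y) * (- C) * h y + exp (- C * y) * H y = exp (- C * y) * (H y - C * h y)"
          by (simp add: algebra_simps)
        moreover have "H y - C * h y \<le> 0" using hb[OF y] by linarith
        ultimately show ?thesis by (simp add: mult_nonneg_nonpos)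
      qed
      ultimately show "\<exists>d. (k has_real_derivative d) (at y) \<and> d \<le> 0" by blast
    qed
    then have "exp (- C * x) * h x \<le> 0" unfolding k_def using h0 by simp
    then show ?thesis by (simp add: mult_le_0_iff)
  next
    case False
    then have le: "x \<le> x0" by simp
    define k where "k y = exp (C * y) * h y" for y
    have "k x \<le> k x0"
    proof (rule DERIV_nonneg_imp_nondecreasing[OF le])
      fix y assume "x \<le> y" "y \<le> x0"
      then have y: "y \<in> {-L<..<L}" using x0 x by auto
      have "(k has_real_derivative exp (C * y) * C * h y + exp (C * y) * H y) (at y)"
        unfolding k_def[abs_def] by (rule derivative_eq_intros hd[OF y] | simp)+
      moreover have "exp (C * y) * C * h y + exp (C * y) * H y \<ge> 0"
      proof -
        have "exp (C * y) * C * h y + exp (C * y) * H y = exp (C * y) * (H y + C * h y)"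
          by (simp add: algebra_simps)
        moreover have "H y + C * h y \<ge> 0" using hb[OF y] by linarith
        ultimately show ?thesis by simp
      qed
      ultimately show "\<exists>d. (k has_real_derivative d) (at y) \<and> 0 \<le> d" by blast
    qed
    then have "exp (C * x) * h x \<le> 0" unfolding k_def using h0 by simp
    then show ?thesis by (simp add: mult_le_0_iff)
  qed
  have "(u1 x - u2 x)\<^sup>2 = 0 \<and> (w1 x - w2 x)\<^sup>2 = 0"
    using hx unfolding h_def by (smt (verit) zero_le_power2)
  then show ?thesis by simp
qed

end


context prob begin

definition sol :: "(real \<Rightarrow> real) \<Rightarrow> (real \<Rightarrow> real) \<Rightarrow> bool" where
  "sol u w \<longleftrightarrow> continuous_on {-L..L} u \<and> u L = m \<and> u (-L) = - m \<and> ode u w (\<lambda>x. - g x)"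

lemma apos_open: "x \<in> {-L<..<L} \<Longrightarrow> a x > 0"
  using a_pos by auto

lemma is_sol: assumes "is_solution L m a (\<lambda>x. - g x) u" obtains w where "sol u w"
proof -
  obtain u' where c: "continuous_on {-L..L} u" "u L = m" "u (-L) = - m"
    and d1: "\<forall>x\<in>{-L<..<L}. (u has_real_derivative u' x) (at x)"
    and d2: "\<forall>x\<in>{-L<..<L}. ((\<lambda>y. a y * u' y) has_real_derivative (- (a x * (- g (u x))))) (at x)"
    using assms unfolding is_solution_def by blast
  have "ode u (\<lambda>y. a y * u' y) (\<lambda>x. - g x)"
    unfolding ode_def
  proof
    fix x assume x: "x \<in> {-L<..<L}"
    have "a x * u' x / a x = u' x" using apos_open[OF x] by simp
    then show "(u has_real_derivative a x * u' x / a x) (at x) \<and>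
         ((\<lambda>y. a y * u' y) has_real_derivative - (a x * - g (u x))) (at x)"
      using d1 d2 x by simp
  qed
  then show ?thesis using c by (intro that[of "\<lambda>y. a y * u' y"]) (simp add: sol_def)
qed

lemma sol_is: assumes "sol u w" shows "is_solution L m a (\<lambda>x. - g x) u"
proof -
  have "\<forall>x\<in>{-L<..<L}. (u has_real_derivative w x / a x) (at x)"
    using assms unfolding sol_def ode_def by blast
  moreover have "\<forall>x\<in>{-L<..<L}. ((\<lambda>y. a y * (w y / a y)) has_real_derivative (- (a x * (- g (u x))))) (at x)"
  proof
    fix x assume x: "x \<in> {-L<..<L}"
    have "(w has_real_derivative (- (a x * (- g (u x))))) (at x)"
      using assms x unfolding sol_def ode_def by blast
    then show "((\<lambda>y. a y * (w y / a y)) has_real_derivative (- (a x * (- g (u x))))) (at x)"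
      by (rule has_field_derivative_transform_within_open[where S="{-L<..<L}"])
         (use x apos_open in \<open>auto simp: less_imp_neq[symmetric]\<close>)
  qed
  ultimately show ?thesis using assms unfolding sol_def is_solution_def
    by (intro conjI exI[of _ "\<lambda>y. w y / a y"]) auto
qed

lemma cont_bounded: fixes u :: "real \<Rightarrow> real" assumes "continuous_on {-L..L} u" obtains R where "\<forall>x\<in>{-L..L}. \<bar>u x\<bar> \<le> R"
proof -
  have "compact (u ` {-L..L})" by (rule compact_continuous_image[OF assms compact_Icc])
  then obtain R where "\<forall>y\<in>u ` {-L..L}. norm y \<le> R" using compact_imp_bounded bounded_iff by metis
  then show ?thesis using that by auto
qed

lemma ivp_g:
  assumes o1: "ode u1 w1 (\<lambda>x. - g x)" and o2: "ode u2 w2 (\<lambda>x. - g x)"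
    and c1: "continuous_on {-L..L} u1" and c2: "continuous_on {-L..L} u2"
    and x0: "x0 \<in> {-L<..<L}" and e1: "u1 x0 = u2 x0" and e2: "w1 x0 = w2 x0"
    and x: "x \<in> {-L<..<L}"
  shows "u1 x = u2 x \<and> w1 x = w2 x"
proof -
  obtain R1 where R1: "\<forall>x\<in>{-L..L}. \<bar>u1 x\<bar> \<le> R1" using cont_bounded[OF c1] by blast
  obtain R2 where R2: "\<forall>x\<in>{-L..L}. \<bar>u2 x\<bar> \<le> R2" using cont_bounded[OF c2] by blast
  obtain K where K: "K \<ge> 0" "\<And>x y. x \<in> {-(max R1 R2)..max R1 R2} \<Longrightarrow> y \<in> {-(max R1 R2)..max R1 R2} \<Longrightarrow> \<bar>g x - g y\<bar> \<le> K * \<bar>x - y\<bar>"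
    by (rule g_lip[where R="max R1 R2"]) blast
  have lip: "\<forall>x\<in>{-L<..<L}. \<bar>(- g (u1 x)) - (- g (u2 x))\<bar> \<le> K * \<bar>u1 x - u2 x\<bar>"
  proof
    fix x assume "x \<in> {-L<..<L}"
    then have "\<bar>u1 x\<bar> \<le> R1" "\<bar>u2 x\<bar> \<le> R2" using R1 R2 by auto
    then have "\<bar>g (u1 x) - g (u2 x)\<bar> \<le> K * \<bar>u1 x - u2 x\<bar>" by (intro K(2)) auto
    then show "\<bar>(- g (u1 x)) - (- g (u2 x))\<bar> \<le> K * \<bar>u1 x - u2 x\<bar>" by (simp add: abs_minus_commute)
  qed
  show ?thesis by (rule ivp_unique[OF o1 o2 lip K(1) x0 e1 e2 x])
qed

definition En :: "(real \<Rightarrow> real) \<Rightarrow> (real \<Rightarrow> real) \<Rightarrow> real \<Rightarrow> real" where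
  "En u w y = (w y / a y)\<^sup>2 / 2 - G (u y)"

lemma En_deriv:
  assumes o: "ode u w (\<lambda>x. - g x)" and x: "x \<in> {-L<..<L}"
  shows "(En u w has_real_derivative - a' x * (w x)\<^sup>2 / (a x)^3) (at x)"
proof -
  have d1: "(u has_real_derivative w x / a x) (at x)" and d2: "(w has_real_derivative - (a x * - g (u x))) (at x)"
    using o x unfolding ode_def by auto
  have ax: "a x \<noteq> 0" using apos_open[OF x] by simp
  have G': "\<And>y. (G has_real_derivative g y) (at y)" using G_deriv by blast
  show ?thesis unfolding En_def[abs_def]
    apply (rule derivative_eq_intros d1 d2 a_deriv_at[OF x] DERIV_chain2[where f=G, OF G'] | simp add: ax)+
    using ax by (simp add: field_simps power2_eq_square power3_eq_cube)
qed

end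


context prob begin

lemma a'_nonneg0: "0 \<le> y \<Longrightarrow> y < L \<Longrightarrow> a' y \<ge> 0"
  using a'_nonneg a'_zero by (cases "y = 0") auto

lemma a'_nonpos0: "-L < y \<Longrightarrow> y \<le> 0 \<Longrightarrow> a' y \<le> 0"
  using a'_nonpos a'_zero by (cases "y = 0") auto

lemma En_mono_right:
  assumes o: "ode u w (\<lambda>x. - g x)" and "0 \<le> x0" "x0 \<le> x" "x < L"
  shows "En u w x \<le> En u w x0"
proof (rule DERIV_nonpos_imp_nonincreasing[OF assms(3)])
  fix y assume y: "x0 \<le> y" "y \<le> x"
  then have yi: "y \<in> {-L<..<L}" using assms L_pos by auto
  have "- a' y * (w y)\<^sup>2 / (a y)^3 \<le> 0"
    using a'_nonneg0[of y] y assms apos_open[OF yi] by (simp add: divide_nonpos_pos)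
  then show "\<exists>d. (En u w has_real_derivative d) (at y) \<and> d \<le> 0"
    using En_deriv[OF o yi] by blast
qed

lemma En_mono_left:
  assumes o: "ode u w (\<lambda>x. - g x)" and "-L < x" "x \<le> x0" "x0 \<le> 0"
  shows "En u w x \<le> En u w x0"
proof (rule DERIV_nonneg_imp_nondecreasing[OF assms(3)])
  fix y assume y: "x \<le> y" "y \<le> x0"
  then have yi: "y \<in> {-L<..<L}" using assms L_pos by auto
  have "a' y \<le> 0" using a'_nonpos0[of y] y assms by auto
  then have "a' y * (w y)\<^sup>2 \<le> 0" by (simp add: mult_nonpos_nonneg)
  then have "- a' y * (w y)\<^sup>2 / (a y)^3 \<ge> 0"
    using apos_open[OF yi] by (simp add: divide_nonpos_pos)
  then show "\<exists>d. (En u w has_real_derivative d) (at y) \<and> 0 \<le> d"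
    using En_deriv[OF o yi] by blast
qed

lemma const_ode: "g c = 0 \<Longrightarrow> ode (\<lambda>_. c) (\<lambda>_. 0) (\<lambda>x. - g x)"
  unfolding ode_def by (auto intro!: derivative_eq_intros)

lemma En_ge: "En u w y \<ge> - G (u y)"
  unfolding En_def by simp

lemma w_nz:
  assumes s: "sol u w" and x0: "x0 \<in> {-L<..<L}" and w0: "w x0 = 0"
  shows False
proof -
  have o: "ode u w (\<lambda>x. - g x)" and c: "continuous_on {-L..L} u" and bL: "u L = m" "u (-L) = - m"
    using s unfolding sol_def by auto
  define c0 where "c0 = u x0"
  have E0: "En u w x0 = - G c0" unfolding En_def c0_def w0 by simp
  have cG: "continuous_on {-L..L} (\<lambda>x. G (u x))"
    using continuous_on_compose2[OF G_cont c] by auto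
  have Gle: "G c0 \<le> G m"
  proof (cases "x0 \<ge> 0")
    case True
    have "G c0 \<le> G (u L)"
    proof (rule continuous_ge_on_closure[of "{x0<..<L}" "\<lambda>x. G (u x)"])
      show "continuous_on (closure {x0<..<L}) (\<lambda>x. G (u x))"
        using x0 by (simp add: continuous_on_subset[OF cG])
      show "L \<in> closure {x0<..<L}" using x0 by simp
      fix x assume x: "x \<in> {x0<..<L}"
      have "En u w x \<le> En u w x0" by (rule En_mono_right[OF o]) (use True x in auto)
      then show "G c0 \<le> G (u x)" using En_ge[where u=u and w=w and y=x] E0 by simp
    qed
    then show ?thesis using bL by simp
  next
    case False
    have "G c0 \<le> G (u (-L))"
    proof (rule continuous_ge_on_closure[of "{-L<..<x0}" "\<lambda>x. G (u x)"])
      show "continuous_on (closure {-L<..<x0}) (\<lambda>x. G (u x))"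
        using x0 by (simp add: continuous_on_subset[OF cG])
      show "-L \<in> closure {-L<..<x0}" using x0 by simp
      fix x assume x: "x \<in> {-L<..<x0}"
      have "En u w x \<le> En u w x0" by (rule En_mono_left[OF o]) (use False x in auto)
      then show "G c0 \<le> G (u x)" using En_ge[where u=u and w=w and y=x] E0 by simp
    qed
    then show ?thesis using bL G_even by simp
  qed
  then have "G c0 = G m" using G_ge[of c0] by simp
  then have gc: "g c0 = 0" by (rule g_zero)
  have cc: "continuous_on {-L..L} (\<lambda>_. c0)" by simp
  have eq: "\<And>x. x \<in> {-L<..<L} \<Longrightarrow> u x = c0"
    using ivp_g[OF o const_ode[OF gc] c cc x0] w0 c0_def by auto
  have "u L = c0"
    by (rule continuous_constant_on_closure[of "{-L<..<L}"]) (use c eq L_pos in auto)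
  moreover have "u (-L) = c0"
    by (rule continuous_constant_on_closure[of "{-L<..<L}"]) (use c eq L_pos in auto)
  ultimately show False using bL m_pos by simp
qed

lemma w_pos:
  assumes s: "sol u w" and x: "x \<in> {-L<..<L}"
  shows "w x > 0"
proof -
  have o: "ode u w (\<lambda>x. - g x)" and c: "continuous_on {-L..L} u" and bL: "u L = m" "u (-L) = - m"
    using s unfolding sol_def by auto
  have wc: "continuous_on {p..q} w" if "-L < p" "q < L" for p q
  proof -
    have "\<forall>y\<in>{p..q}. isCont w y"
      using o that unfolding ode_def by (force intro: DERIV_isCont)
    then show ?thesis by (simp add: continuous_at_imp_continuous_on)
  qed
  have same: "w p > 0" if p: "p \<in> {-L<..<L}" and q: "q \<in> {-L<..<L}" and wq: "w q > 0" for p q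
  proof (rule ccontr)
    assume "\<not> w p > 0"
    then have "w p < 0" using w_nz[OF s p] by force
    show False
    proof (cases "p \<le> q")
      case True
      obtain z where "p \<le> z" "z \<le> q" "w z = 0"
        using IVT'[where f=w and a=p and y=0 and b=q] True wc[of p q] p q \<open>w p < 0\<close> wq by auto
      then show False using w_nz[OF s, of z] p q by auto
    next
      case False
      obtain z where "q \<le> z" "z \<le> p" "w z = 0"
        using IVT2'[where f=w and a=q and y=0 and b=p] False wc[of q p] p q \<open>w p < 0\<close> wq by auto
      then show False using w_nz[OF s, of z] p q by auto
    qed
  qed
  have z: "0 \<in> {-L<..<L}" using L_pos by simp
  have "w 0 > 0"
  proof (rule ccontr)
    assume "\<not> w 0 > 0"
    then have neg: "w y < 0" if "y \<in> {-L<..<L}" for y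
      using same[OF z that] w_nz[OF s that] by force
    have "(\<lambda>y. - u y) (-L) < (\<lambda>y. - u y) L"
    proof (rule DERIV_pos_imp_increasing_open[where a="-L" and b=L and f="\<lambda>y. - u y"])
      show "- L < L" using L_pos by simp
      show "continuous_on {-L..L} (\<lambda>y. - u y)" using c by (intro continuous_intros)
      fix y assume y: "-L < y" "y < L"
      then have yi: "y \<in> {-L<..<L}" by simp
      have "((\<lambda>y. - u y) has_real_derivative - (w y / a y)) (at y)"
        using o yi unfolding ode_def by (auto intro!: derivative_eq_intros)
      moreover have "- (w y / a y) > 0" using neg[OF yi] apos_open[OF yi] by (simp add: divide_neg_pos)
      ultimately show "\<exists>d. ((\<lambda>y. - u y) has_real_derivative d) (at y) \<and> 0 < d" by blast
    qed
    then show False using bL m_pos by simp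
  qed
  then show ?thesis using same[OF x z] by simp
qed

lemma sol_mono:
  assumes s: "sol u w"
  shows "strict_mono_on {-L..L} u"
proof (rule strict_mono_onI)
  fix p q assume pq: "p \<in> {-L..L}" "q \<in> {-L..L}" "p < q"
  have o: "ode u w (\<lambda>x. - g x)" and c: "continuous_on {-L..L} u"
    using s unfolding sol_def by auto
  show "u p < u q"
  proof (rule DERIV_pos_imp_increasing_open[OF pq(3)])
    show "continuous_on {p..q} u" using c by (rule continuous_on_subset) (use pq in auto)
    fix y assume y: "p < y" "y < q"
    then have yi: "y \<in> {-L<..<L}" using pq by auto
    have "(u has_real_derivative w y / a y) (at y)" using o yi unfolding ode_def by auto
    moreover have "w y / a y > 0" using w_pos[OF s yi] apos_open[OF yi] by simp
    ultimately show "\<exists>d. (u has_real_derivative d) (at y) \<and> 0 < d" by blast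
  qed
qed

end


context prob begin

lemma sol_reflect:
  assumes s: "sol u w"
  shows "sol (\<lambda>x. - u (- x)) (\<lambda>x. w (- x))"
proof -
  have o: "ode u w (\<lambda>x. - g x)" and c: "continuous_on {-L..L} u" and bL: "u L = m" "u (-L) = - m"
    using s unfolding sol_def by auto
  have c': "continuous_on {-L..L} (\<lambda>x. - u (- x))"
  proof -
    have "continuous_on {-L..L} (\<lambda>x. - x)" by (intro continuous_intros)
    moreover have "(\<lambda>x. - x) ` {-L..L} \<subseteq> {-L..L}" by auto
    ultimately have "continuous_on {-L..L} (\<lambda>x. u (- x))"
      using continuous_on_compose2[OF c] by blast
    then show ?thesis by (intro continuous_intros)
  qed
  have o': "ode (\<lambda>x. - u (- x)) (\<lambda>x. w (- x)) (\<lambda>x. - g x)"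
    unfolding ode_def
  proof
    fix x assume x: "x \<in> {-L<..<L}"
    then have mx: "- x \<in> {-L<..<L}" by auto
    have d1: "(u has_real_derivative w (- x) / a (- x)) (at (- x))"
      and d2: "(w has_real_derivative - (a (- x) * - g (u (- x)))) (at (- x))"
      using o mx unfolding ode_def by auto
    have ae: "a (- x) = a x" using a_even x by auto
    have "((\<lambda>x. - u (- x)) has_real_derivative - (w (- x) / a (- x) * (- 1))) (at x)"
      by (rule derivative_eq_intros DERIV_chain2[where f=u and g="\<lambda>y. - y", OF d1] | simp)+
    moreover have "((\<lambda>x. w (- x)) has_real_derivative (- (a (- x) * - g (u (- x)))) * (- 1)) (at x)"
      by (rule DERIV_chain2[where f=w and g="\<lambda>y. - y", OF d2]) (auto intro!: derivative_eq_intros)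
    ultimately show "((\<lambda>x. - u (- x)) has_real_derivative w (- x) / a x) (at x) \<and>
         ((\<lambda>x. w (- x)) has_real_derivative - (a x * - g (- u (- x)))) (at x)"
      using ae g_odd by simp
  qed
  show ?thesis unfolding sol_def using c' o' bL by simp
qed

definition Xi :: "(real \<Rightarrow> real) \<Rightarrow> real \<Rightarrow> real" where
  "Xi u = inv_into {-L..L} u"

lemma Xi_props:
  assumes s: "sol u w"
  shows "\<And>t. t \<in> {-m..m} \<Longrightarrow> Xi u t \<in> {-L..L} \<and> u (Xi u t) = t"
    and "\<And>x. x \<in> {-L..L} \<Longrightarrow> Xi u (u x) = x"
    and "\<And>s t. s \<in> {-m..m} \<Longrightarrow> t \<in> {-m..m} \<Longrightarrow> s \<le> t \<Longrightarrow> Xi u s \<le> Xi u t"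
    and "continuous_on {-m..m} (Xi u)"
    and "\<And>t. t \<in> {-m<..<m} \<Longrightarrow> Xi u t \<in> {-L<..<L}"
    and "\<And>t. t \<in> {-m<..<m} \<Longrightarrow> (Xi u has_real_derivative a (Xi u t) / w (Xi u t)) (at t)"
    and "\<And>t. t \<in> {-m<..<m} \<Longrightarrow> ((\<lambda>t. (w (Xi u t))\<^sup>2) has_real_derivative 2 * (a (Xi u t))\<^sup>2 * g t) (at t)"
proof -
  have o: "ode u w (\<lambda>x. - g x)" and c: "continuous_on {-L..L} u" and bL: "u L = m" "u (-L) = - m"
    using s unfolding sol_def by auto
  have sm: "strict_mono_on {-L..L} u" by (rule sol_mono[OF s])
  have inj: "inj_on u {-L..L}" by (rule strict_mono_on_imp_inj_on[OF sm])
  have img: "u ` {-L..L} = {-m..m}"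
  proof
    show "u ` {-L..L} \<subseteq> {-m..m}"
    proof
      fix y assume "y \<in> u ` {-L..L}"
      then obtain x where x: "x \<in> {-L..L}" "y = u x" by auto
      have "u (-L) \<le> u x" using sm x L_pos unfolding strict_mono_on_def
        by (cases "x = -L") (auto intro!: less_imp_le)
      moreover have "u x \<le> u L" using sm x L_pos unfolding strict_mono_on_def
        by (cases "x = L") (auto intro!: less_imp_le)
      ultimately show "y \<in> {-m..m}" using x bL by auto
    qed
    show "{-m..m} \<subseteq> u ` {-L..L}"
    proof
      fix t assume t: "t \<in> {-m..m}"
      obtain x where "x \<ge> -L" "x \<le> L" "u x = t"
        using IVT'[where f=u and a="-L" and b=L and y=t] t bL c L_pos by auto
      then show "t \<in> u ` {-L..L}" by force
    qed
  qed
  show P1: "Xi u t \<in> {-L..L} \<and> u (Xi u t) = t" if "t \<in> {-m..m}" for t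
    using that img unfolding Xi_def by (metis inv_into_into f_inv_into_f)
  show P2: "Xi u (u x) = x" if "x \<in> {-L..L}" for x
    unfolding Xi_def by (rule inv_into_f_f[OF inj that])
  show P3: "Xi u s \<le> Xi u t" if "s \<in> {-m..m}" "t \<in> {-m..m}" "s \<le> t" for s t
  proof (rule ccontr)
    assume "\<not> Xi u s \<le> Xi u t"
    then have "u (Xi u t) < u (Xi u s)" using sm P1[OF that(1)] P1[OF that(2)]
      unfolding strict_mono_on_def by (metis not_le)
    then show False using P1[OF that(1)] P1[OF that(2)] that(3) by simp
  qed
  show P4: "continuous_on {-m..m} (Xi u)"
    using continuous_on_inv[OF c compact_Icc, of "Xi u"] P2 img by auto
  show P5: "Xi u t \<in> {-L<..<L}" if t: "t \<in> {-m<..<m}" for t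
  proof -
    have "Xi u t \<in> {-L..L}" "u (Xi u t) = t" using P1 t by auto
    moreover have "Xi u t \<noteq> L" "Xi u t \<noteq> -L" using calculation(2) t bL by auto
    ultimately show ?thesis by auto
  qed
  show P6: "(Xi u has_real_derivative a (Xi u t) / w (Xi u t)) (at t)" if t: "t \<in> {-m<..<m}" for t
  proof -
    have xi: "Xi u t \<in> {-L<..<L}" by (rule P5[OF t])
    have d: "(u has_real_derivative w (Xi u t) / a (Xi u t)) (at (Xi u t))"
      using o xi unfolding ode_def by auto
    have nz: "w (Xi u t) / a (Xi u t) \<noteq> 0" using w_pos[OF s xi] apos_open[OF xi] by simp
    have ic: "isCont (Xi u) t"
      by (rule continuous_on_interior[OF P4]) (use t in simp)
    have "(Xi u has_real_derivative inverse (w (Xi u t) / a (Xi u t))) (at t)"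
      by (rule DERIV_inverse_function[where f=u and g="Xi u" and x=t and a="-m" and b=m, OF d nz])
         (use t P1 ic in auto)
    then show ?thesis by simp
  qed
  show "((\<lambda>t. (w (Xi u t))\<^sup>2) has_real_derivative 2 * (a (Xi u t))\<^sup>2 * g t) (at t)"
    if t: "t \<in> {-m<..<m}" for t
  proof -
    have xi: "Xi u t \<in> {-L<..<L}" by (rule P5[OF t])
    have d: "(w has_real_derivative - (a (Xi u t) * - g (u (Xi u t)))) (at (Xi u t))"
      using o xi unfolding ode_def by auto
    then have d': "(w has_real_derivative a (Xi u t) * g t) (at (Xi u t))"
      using P1[of t] t by simp
    have nz: "w (Xi u t) \<noteq> 0" using w_pos[OF s xi] by simp
    have "((\<lambda>t. w (Xi u t)) has_real_derivative a (Xi u t) * g t * (a (Xi u t) / w (Xi u t))) (at t)"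
      by (rule DERIV_chain2[where f=w, OF d' P6[OF t]])
    then have "((\<lambda>t. (w (Xi u t))\<^sup>2) has_real_derivative
        2 * w (Xi u t) * (a (Xi u t) * g t * (a (Xi u t) / w (Xi u t)))) (at t)"
      by (auto intro!: derivative_eq_intros simp: power2_eq_square)
    moreover have "2 * w (Xi u t) * (a (Xi u t) * g t * (a (Xi u t) / w (Xi u t))) = 2 * (a (Xi u t))\<^sup>2 * g t"
      using nz by (simp add: field_simps power2_eq_square)
    ultimately show ?thesis by simp
  qed
qed

end


context prob begin

lemma core:
  assumes t: "0 < ta" "ta < tb" "tb \<le> m"
    and c1: "continuous_on {ta..tb} Xa" and c2: "continuous_on {ta..tb} Xb"
    and rng: "\<forall>t\<in>{ta..tb}. 0 \<le> Xa t \<and> 0 \<le> Xb t \<and> Xa t \<le> L \<and> Xb t \<le> L"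
    and dX1: "\<forall>t\<in>{ta..<tb}. (Xa has_real_derivative a (Xa t) / Wa t) (at t)"
    and dX2: "\<forall>t\<in>{ta..<tb}. (Xb has_real_derivative a (Xb t) / Wb t) (at t)"
    and dP1: "\<forall>t\<in>{ta..<tb}. ((\<lambda>t. (Wa t)\<^sup>2) has_real_derivative 2 * (a (Xa t))\<^sup>2 * g t) (at t)"
    and dP2: "\<forall>t\<in>{ta..<tb}. ((\<lambda>t. (Wb t)\<^sup>2) has_real_derivative 2 * (a (Xb t))\<^sup>2 * g t) (at t)"
    and Wp: "\<forall>t\<in>{ta..<tb}. Wa t > 0 \<and> Wb t > 0"
    and D0: "Xb ta > Xa ta" and Q0: "(Wb ta)\<^sup>2 \<le> (Wa ta)\<^sup>2" and e: "Xa tb = Xb tb"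
  shows False
proof -
  have ap: "a (Xa t) > 0" "a (Xb t) > 0" if "t \<in> {ta..tb}" for t
  proof -
    have r: "0 \<le> Xa t \<and> 0 \<le> Xb t \<and> Xa t \<le> L \<and> Xb t \<le> L" using rng that by auto
    have "Xa t \<in> {-L..L}" "Xb t \<in> {-L..L}" using r L_pos by auto
    then show "a (Xa t) > 0" "a (Xb t) > 0" using a_pos by auto
  qed
  define D where "D t = Xb t - Xa t" for t
  have cD: "continuous_on {ta..tb} D" unfolding D_def using c1 c2 by (intro continuous_intros)
  define Z where "Z = {ta..tb} \<inter> D -` {..0}"
  have "closed Z" unfolding Z_def by (rule continuous_closed_preimage[OF cD]) auto
  then have cZ: "compact Z" unfolding Z_def using compact_eq_bounded_closed bounded_Int bounded_closed_interval by blast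
  have "tb \<in> Z" unfolding Z_def D_def using e t by auto
  then have "Z \<noteq> {}" by auto
  then obtain \<tau> where \<tau>: "\<tau> \<in> Z" "\<forall>s\<in>Z. \<tau> \<le> s" using compact_attains_inf[OF cZ] by blast
  have \<tau>1: "ta \<le> \<tau>" "\<tau> \<le> tb" "D \<tau> \<le> 0" using \<tau> unfolding Z_def by auto
  have \<tau>0: "ta < \<tau>" using \<tau>1 D0 unfolding D_def by (cases "ta = \<tau>") auto
  have Dpos: "D s > 0" if "ta \<le> s" "s < \<tau>" for s
  proof (rule ccontr)
    assume "\<not> D s > 0"
    then have "s \<in> Z" unfolding Z_def using that \<tau>1 by auto
    then show False using \<tau> that by auto
  qed
  have amon: "a (Xa s) \<le> a (Xb s)" if "ta \<le> s" "s < \<tau>" for s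
    using a_mono[of "Xa s" "Xb s"] Dpos[OF that] rng that \<tau>1 unfolding D_def by auto
  have Qmono: "(Wb s)\<^sup>2 \<le> (Wa s)\<^sup>2" if s: "ta \<le> s" "s < \<tau>" for s
  proof -
    have "(\<lambda>t. (Wa t)\<^sup>2 - (Wb t)\<^sup>2) ta \<le> (\<lambda>t. (Wa t)\<^sup>2 - (Wb t)\<^sup>2) s"
    proof (rule DERIV_nonneg_imp_nondecreasing[OF s(1)])
      fix y assume y: "ta \<le> y" "y \<le> s"
      then have yi: "y \<in> {ta..<tb}" using s \<tau>1 by auto
      have "((\<lambda>t. (Wa t)\<^sup>2 - (Wb t)\<^sup>2) has_real_derivative
          2 * (a (Xa y))\<^sup>2 * g y - 2 * (a (Xb y))\<^sup>2 * g y) (at y)"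
        using DERIV_diff[OF bspec[OF dP1 yi] bspec[OF dP2 yi]] by simp
      moreover have "2 * (a (Xa y))\<^sup>2 * g y - 2 * (a (Xb y))\<^sup>2 * g y \<ge> 0"
      proof -
        have gy: "g y \<le> 0" using g_nonpos y t s \<tau>1 by auto
        have "a (Xa y) \<le> a (Xb y)" using amon y s by auto
        moreover have "a (Xa y) > 0" using ap yi by auto
        ultimately have "(a (Xa y))\<^sup>2 \<le> (a (Xb y))\<^sup>2" by (simp add: power_mono)
        then have "((a (Xa y))\<^sup>2 - (a (Xb y))\<^sup>2) * g y \<ge> 0" using gy
          by (simp add: mult_nonpos_nonpos)
        then show ?thesis by (simp add: algebra_simps)
      qed
      ultimately show "\<exists>d. ((\<lambda>t. (Wa t)\<^sup>2 - (Wb t)\<^sup>2) has_real_derivative d) (at y) \<and> 0 \<le> d"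
        by blast
    qed
    then show ?thesis using Q0 by simp
  qed
  have "D ta \<le> D \<tau>"
  proof (rule DERIV_nonneg_imp_increasing_open[OF less_imp_le[OF \<tau>0]])
    show "continuous_on {ta..\<tau>} D" using cD by (rule continuous_on_subset) (use \<tau>1 in auto)
    fix y assume y: "ta < y" "y < \<tau>"
    then have yi: "y \<in> {ta..<tb}" using \<tau>1 by auto
    have "(D has_real_derivative a (Xb y) / Wb y - a (Xa y) / Wa y) (at y)"
      unfolding D_def[abs_def] using DERIV_diff[OF bspec[OF dX2 yi] bspec[OF dX1 yi]] by simp
    moreover have "a (Xb y) / Wb y - a (Xa y) / Wa y \<ge> 0"
    proof -
      have w: "Wa y > 0" "Wb y > 0" using Wp yi by auto
      have "(Wb y)\<^sup>2 \<le> (Wa y)\<^sup>2" using Qmono y by auto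
      then have "Wb y \<le> Wa y" using w by (simp add: power2_le_iff_abs_le abs_le_iff)
      moreover have "a (Xa y) \<le> a (Xb y)" using amon y by auto
      moreover have "a (Xa y) > 0" using ap yi by auto
      ultimately have "a (Xa y) / Wa y \<le> a (Xb y) / Wb y" using w
        by (intro frac_le) auto
      then show ?thesis by simp
    qed
    ultimately show "\<exists>d. (D has_real_derivative d) (at y) \<and> 0 \<le> d" by blast
  qed
  then show False using \<tau>1 D0 unfolding D_def by simp
qed

end


context prob begin

lemma sol_0_lt_m: assumes s: "sol u w" shows "u 0 < m" "- m < u 0"
proof -
  have "strict_mono_on {-L..L} u" by (rule sol_mono[OF s])
  then have "u 0 < u L" "u (-L) < u 0" using L_pos unfolding strict_mono_on_def by auto
  then show "u 0 < m" "- m < u 0" using s unfolding sol_def by auto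
qed

lemma u0_le: assumes s: "sol u w" shows "u 0 \<le> 0"
proof (rule ccontr)
  assume "\<not> u 0 \<le> 0"
  define c where "c = u 0"
  have c0: "0 < c" using \<open>\<not> u 0 \<le> 0\<close> c_def by simp
  have cm: "c < m" using sol_0_lt_m[OF s] c_def by simp
  define v where "v x = - u (- x)" for x
  define wv where "wv x = w (- x)" for x
  have sv: "sol v wv" unfolding v_def[abs_def] wv_def[abs_def] by (rule sol_reflect[OF s])
  define Xu where "Xu = Xi u"
  define Xv where "Xv = Xi v"
  note U = Xi_props[OF s, folded Xu_def]
  note V = Xi_props[OF sv, folded Xv_def]
  have z: "0 \<in> {-L..L}" "L \<in> {-L..L}" using L_pos by auto
  have Xuc: "Xu c = 0" using U(2)[OF z(1)] c_def by simp
  have Xvmc: "Xv (- c) = 0" using V(2)[OF z(1)] unfolding v_def c_def by simp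
  have cI: "c \<in> {-m..m}" "- c \<in> {-m..m}" using c0 cm by auto
  have Xvc: "Xv c > 0"
  proof -
    have "Xv (- c) \<le> Xv c" using V(3)[OF cI(2) cI(1)] c0 by simp
    moreover have "Xv c \<noteq> 0"
    proof
      assume "Xv c = 0"
      then have "v 0 = c" using V(1)[OF cI(1)] by simp
      then show False using c0 unfolding v_def c_def by simp
    qed
    ultimately show ?thesis using Xvmc by simp
  qed
  have Rle: "(wv (Xv c))\<^sup>2 \<le> (wv (Xv (- c)))\<^sup>2"
  proof -
    define R where "R t = (wv (Xv t))\<^sup>2 - (wv (Xv (- t)))\<^sup>2" for t
    have "R c \<le> R 0"
    proof (rule DERIV_nonpos_imp_nonincreasing[OF less_imp_le[OF c0]])
      fix y assume y: "0 \<le> y" "y \<le> c"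
      have yi: "y \<in> {-m<..<m}" "- y \<in> {-m<..<m}" using y cm c0 by auto
      note d1 = V(7)[OF yi(1)]
      have d2: "((\<lambda>t. (wv (Xv (- t)))\<^sup>2) has_real_derivative 2 * (a (Xv (- y)))\<^sup>2 * g (- y) * (- 1)) (at y)"
        by (rule DERIV_chain2[where f="\<lambda>t. (wv (Xv t))\<^sup>2" and g="\<lambda>t. - t", OF V(7)[OF yi(2)]])
           (auto intro!: derivative_eq_intros)
      have dR: "(R has_real_derivative 2 * (a (Xv y))\<^sup>2 * g y - 2 * (a (Xv (- y)))\<^sup>2 * g (- y) * (- 1)) (at y)"
        unfolding R_def[abs_def] by (rule DERIV_diff[OF d1 d2])
      have "2 * (a (Xv y))\<^sup>2 * g y - 2 * (a (Xv (- y)))\<^sup>2 * g (- y) * (- 1)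
          = 2 * g y * ((a (Xv y))\<^sup>2 - (a (Xv (- y)))\<^sup>2)"
        using g_odd[of y] by (simp add: algebra_simps)
      moreover have "g y \<le> 0"
      proof (cases "y = 0")
        case True then show ?thesis using g_odd[of 0] by simp
      next
        case False then show ?thesis using g_nonpos y cm by auto
      qed
      moreover have "(a (Xv (- y)))\<^sup>2 \<le> (a (Xv y))\<^sup>2"
      proof -
        have "Xv (- c) \<le> Xv (- y)" using V(3)[of "-c" "-y"] cI y cm by auto
        moreover have "Xv (- y) \<le> Xv y" using V(3)[of "-y" y] y cm c0 by auto
        moreover have "Xv y \<le> L" using V(1)[of y] yi by auto
        ultimately have "a (Xv (- y)) \<le> a (Xv y)" using a_mono Xvmc by auto
        moreover have "a (Xv (- y)) > 0" using apos_open V(5)[OF yi(2)] by auto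
        ultimately show ?thesis by (simp add: power_mono)
      qed
      ultimately have "2 * (a (Xv y))\<^sup>2 * g y - 2 * (a (Xv (- y)))\<^sup>2 * g (- y) * (- 1) \<le> 0"
        by (simp add: mult_nonpos_nonneg)
      then show "\<exists>d. (R has_real_derivative d) (at y) \<and> d \<le> 0" using dR by blast
    qed
    then show ?thesis unfolding R_def by simp
  qed
  have Q0: "(wv (Xv c))\<^sup>2 \<le> (w (Xu c))\<^sup>2" using Rle Xvmc Xuc unfolding wv_def by simp
  show False
  proof (rule core[where ta=c and tb=m and Xa=Xu and Xb=Xv and Wa="\<lambda>t. w (Xu t)" and Wb="\<lambda>t. wv (Xv t)"])
    show "0 < c" "c < m" "m \<le> m" using c0 cm by auto
    show "continuous_on {c..m} Xu" using U(4) by (rule continuous_on_subset) (use c0 in auto)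
    show "continuous_on {c..m} Xv" using V(4) by (rule continuous_on_subset) (use c0 in auto)
    show "\<forall>t\<in>{c..m}. 0 \<le> Xu t \<and> 0 \<le> Xv t \<and> Xu t \<le> L \<and> Xv t \<le> L"
    proof
      fix t assume t: "t \<in> {c..m}"
      then have tI: "t \<in> {-m..m}" using c0 by auto
      have "Xu c \<le> Xu t" using U(3)[OF cI(1) tI] t by auto
      moreover have "Xv (- c) \<le> Xv t" using V(3)[OF cI(2) tI] t c0 by auto
      ultimately show "0 \<le> Xu t \<and> 0 \<le> Xv t \<and> Xu t \<le> L \<and> Xv t \<le> L"
        using Xuc Xvmc U(1)[OF tI] V(1)[OF tI] by auto
    qed
    have tI: "t \<in> {-m<..<m}" if "t \<in> {c..<m}" for t using that c0 by auto
    show "\<forall>t\<in>{c..<m}. (Xu has_real_derivative a (Xu t) / w (Xu t)) (at t)" using U(6) tI by blast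
    show "\<forall>t\<in>{c..<m}. (Xv has_real_derivative a (Xv t) / wv (Xv t)) (at t)" using V(6) tI by blast
    show "\<forall>t\<in>{c..<m}. ((\<lambda>t. (w (Xu t))\<^sup>2) has_real_derivative 2 * (a (Xu t))\<^sup>2 * g t) (at t)"
      using U(7) tI by blast
    show "\<forall>t\<in>{c..<m}. ((\<lambda>t. (wv (Xv t))\<^sup>2) has_real_derivative 2 * (a (Xv t))\<^sup>2 * g t) (at t)"
      using V(7) tI by blast
    show "\<forall>t\<in>{c..<m}. w (Xu t) > 0 \<and> wv (Xv t) > 0"
      using w_pos[OF s] w_pos[OF sv] U(5) V(5) tI by blast
    show "Xv c > Xu c" using Xvc Xuc by simp
    show "(wv (Xv c))\<^sup>2 \<le> (w (Xu c))\<^sup>2" by (rule Q0)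
    have "u L = m" "v L = m" using s sv unfolding sol_def by auto
    then show "Xu m = Xv m" using U(2)[OF z(2)] V(2)[OF z(2)] by simp
  qed
qed

lemma u0: assumes s: "sol u w" shows "u 0 = 0"
proof -
  have "sol (\<lambda>x. - u (- x)) (\<lambda>x. w (- x))" by (rule sol_reflect[OF s])
  from u0_le[OF this] u0_le[OF s] show ?thesis by simp
qed

end


context prob begin

lemma uniq_aux:
  assumes s1: "sol u1 w1" and s2: "sol u2 w2" and lt: "w2 0 < w1 0"
  shows False
proof -
  define X1 where "X1 = Xi u1"
  define X2 where "X2 = Xi u2"
  note U = Xi_props[OF s1, folded X1_def]
  note V = Xi_props[OF s2, folded X2_def]
  have z: "0 \<in> {-L..L}" "L \<in> {-L..L}" "0 \<in> {-L<..<L}" using L_pos by auto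
  have z0: "(0::real) \<in> {-m<..<m}" "(0::real) \<in> {-m..m}" using m_pos by auto
  have X10: "X1 0 = 0" using U(2)[OF z(1)] u0[OF s1] by simp
  have X20: "X2 0 = 0" using V(2)[OF z(1)] u0[OF s2] by simp
  have w2p: "w2 0 > 0" using w_pos[OF s2 z(3)] .
  have a0: "a 0 > 0" using apos_open[OF z(3)] .
  define D where "D t = X2 t - X1 t" for t
  have dD: "(D has_real_derivative a (X2 0) / w2 (X2 0) - a (X1 0) / w1 (X1 0)) (at 0)"
    unfolding D_def[abs_def] by (rule DERIV_diff[OF V(6)[OF z0(1)] U(6)[OF z0(1)]])
  have "a (X1 0) / w1 (X1 0) < a (X2 0) / w2 (X2 0)"
    unfolding X10 X20 using lt w2p a0 by (intro divide_strict_left_mono) auto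
  then obtain d1 where d1: "d1 > 0" "\<And>h. h > 0 \<Longrightarrow> h < d1 \<Longrightarrow> D 0 < D h"
    using DERIV_pos_inc_right[OF dD] by auto
  define Q where "Q t = (w1 (X1 t))\<^sup>2 - (w2 (X2 t))\<^sup>2" for t
  have dQ: "(Q has_real_derivative 2 * (a (X1 0))\<^sup>2 * g 0 - 2 * (a (X2 0))\<^sup>2 * g 0) (at 0)"
    unfolding Q_def[abs_def] by (rule DERIV_diff[OF U(7)[OF z0(1)] V(7)[OF z0(1)]])
  have Q0: "Q 0 > 0" unfolding Q_def X10 X20 using lt w2p
    by (simp add: power_strict_mono)
  obtain d2 where d2: "d2 > 0" "\<And>x. dist x 0 < d2 \<Longrightarrow> dist (Q x) (Q 0) < Q 0"
    using DERIV_isCont[OF dQ] Q0 unfolding continuous_at_eps_delta by blast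
  define h where "h = min (min d1 d2) m / 2"
  have h: "0 < h" "h < d1" "h < d2" "h < m" unfolding h_def using d1 d2 m_pos by auto
  have Dh: "X2 h > X1 h" using d1(2)[OF h(1) h(2)] X10 X20 unfolding D_def by simp
  have Qh: "Q h > 0" using d2(2)[of h] h by (auto simp: dist_real_def)
  show False
  proof (rule core[where ta=h and tb=m and Xa=X1 and Xb=X2 and Wa="\<lambda>t. w1 (X1 t)" and Wb="\<lambda>t. w2 (X2 t)"])
    show "0 < h" "h < m" "m \<le> m" using h by auto
    show "continuous_on {h..m} X1" using U(4) by (rule continuous_on_subset) (use h in auto)
    show "continuous_on {h..m} X2" using V(4) by (rule continuous_on_subset) (use h in auto)
    show "\<forall>t\<in>{h..m}. 0 \<le> X1 t \<and> 0 \<le> X2 t \<and> X1 t \<le> L \<and> X2 t \<le> L"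
    proof
      fix t assume t: "t \<in> {h..m}"
      then have tI: "t \<in> {-m..m}" using h by auto
      have "X1 0 \<le> X1 t" using U(3)[OF z0(2) tI] t h by auto
      moreover have "X2 0 \<le> X2 t" using V(3)[OF z0(2) tI] t h by auto
      ultimately show "0 \<le> X1 t \<and> 0 \<le> X2 t \<and> X1 t \<le> L \<and> X2 t \<le> L"
        using X10 X20 U(1)[OF tI] V(1)[OF tI] by auto
    qed
    have tI: "t \<in> {-m<..<m}" if "t \<in> {h..<m}" for t using that h by auto
    show "\<forall>t\<in>{h..<m}. (X1 has_real_derivative a (X1 t) / w1 (X1 t)) (at t)" using U(6) tI by blast
    show "\<forall>t\<in>{h..<m}. (X2 has_real_derivative a (X2 t) / w2 (X2 t)) (at t)" using V(6) tI by blast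
    show "\<forall>t\<in>{h..<m}. ((\<lambda>t. (w1 (X1 t))\<^sup>2) has_real_derivative 2 * (a (X1 t))\<^sup>2 * g t) (at t)"
      using U(7) tI by blast
    show "\<forall>t\<in>{h..<m}. ((\<lambda>t. (w2 (X2 t))\<^sup>2) has_real_derivative 2 * (a (X2 t))\<^sup>2 * g t) (at t)"
      using V(7) tI by blast
    show "\<forall>t\<in>{h..<m}. w1 (X1 t) > 0 \<and> w2 (X2 t) > 0"
      using w_pos[OF s1] w_pos[OF s2] U(5) V(5) tI by blast
    show "X2 h > X1 h" by (rule Dh)
    show "(w2 (X2 h))\<^sup>2 \<le> (w1 (X1 h))\<^sup>2" using Qh unfolding Q_def by simp
    have "u1 L = m" "u2 L = m" using s1 s2 unfolding sol_def by auto
    then show "X1 m = X2 m" using U(2)[OF z(2)] V(2)[OF z(2)] by simp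
  qed
qed

lemma uniq:
  assumes s1: "sol u1 w1" and s2: "sol u2 w2" and x: "x \<in> {-L..L}"
  shows "u1 x = u2 x"
proof -
  have z: "0 \<in> {-L<..<L}" using L_pos by auto
  have e: "w1 0 = w2 0" using uniq_aux[OF s1 s2] uniq_aux[OF s2 s1] by force
  have o1: "ode u1 w1 (\<lambda>x. - g x)" "continuous_on {-L..L} u1" "u1 L = m" "u1 (-L) = - m"
    using s1 unfolding sol_def by auto
  have o2: "ode u2 w2 (\<lambda>x. - g x)" "continuous_on {-L..L} u2" "u2 L = m" "u2 (-L) = - m"
    using s2 unfolding sol_def by auto
  have e0: "u1 0 = u2 0" using u0[OF s1] u0[OF s2] by simp
  show ?thesis
  proof (cases "x \<in> {-L<..<L}")
    case True
    show ?thesis using ivp_g[OF o1(1) o2(1) o1(2) o2(2) z e0 e True] by simp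
  next
    case False
    then have "x = L \<or> x = -L" using x by auto
    then show ?thesis using o1 o2 by auto
  qed
qed

end


lemma exp_int_bound:
  fixes k :: "real \<Rightarrow> real"
  assumes lam: "lam > 0" and C: "C \<ge> 0" and py: "p \<le> y" and kc: "continuous_on {p..y} k"
    and kb: "\<forall>t\<in>{p..y}. \<bar>k t\<bar> \<le> C * exp (lam * t)"
  shows "\<bar>integral {p..y} k\<bar> \<le> C * exp (lam * y) / lam"
proof -
  have fi: "((\<lambda>t. C * exp (lam * t)) has_integral (C * exp (lam * y) / lam - C * exp (lam * p) / lam)) {p..y}"
  proof (rule fundamental_theorem_of_calculus[OF py])
    fix t assume "t \<in> {p..y}"
    have "((\<lambda>t. C * exp (lam * t) / lam) has_real_derivative C * (exp (lam * t) * lam) / lam) (at t)"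
      by (auto intro!: derivative_eq_intros)
    then have "((\<lambda>t. C * exp (lam * t) / lam) has_real_derivative C * exp (lam * t)) (at t within {p..y})"
      using lam by (simp add: has_field_derivative_at_within)
    then show "((\<lambda>t. C * exp (lam * t) / lam) has_vector_derivative C * exp (lam * t)) (at t within {p..y})"
      by (simp add: has_real_derivative_iff_has_vector_derivative)
  qed
  have "norm (integral {p..y} k) \<le> integral {p..y} (\<lambda>t. C * exp (lam * t))"
    by (rule integral_norm_bound_integral)
       (use kc fi kb in \<open>auto intro: integrable_continuous_real has_integral_integrable\<close>)
  also have "\<dots> = C * exp (lam * y) / lam - C * exp (lam * p) / lam" by (rule integral_unique[OF fi])
  also have "\<dots> \<le> C * exp (lam * y) / lam" using C lam by simp
  finally show ?thesis by simp
qed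

lemma ind_int_cont:
  fixes k :: "real \<Rightarrow> real"
  shows "continuous_on {p..q} k \<Longrightarrow> continuous_on {p..q} (\<lambda>x. integral {p..x} k)"
  by (rule indefinite_integral_continuous_1) (rule integrable_continuous_real)

lemma ind_int_deriv:
  fixes k :: "real \<Rightarrow> real"
  assumes "continuous_on {p..q} k" "x \<in> {p<..<q}"
  shows "((\<lambda>x. integral {p..x} k) has_real_derivative k x) (at x)"
proof -
  have "((\<lambda>x. integral {p..x} k) has_vector_derivative k x) (at x within {p..q})"
    by (rule integral_has_vector_derivative) (use assms in auto)
  moreover have "at x within {p..q} = at x" by (rule at_within_interior) (use assms in simp)
  ultimately show ?thesis by (simp add: has_real_derivative_iff_has_vector_derivative)
qed

context prob begin

definition cl :: "real \<Rightarrow> real" where "cl x = max (-L) (min L x)"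
definition aa :: "real \<Rightarrow> real" where "aa x = a (cl x)"
definition FF :: "real \<Rightarrow> real" where "FF y = - g (max (-m) (min m y))"
definition Wop :: "real \<Rightarrow> (real \<Rightarrow> real) \<Rightarrow> real \<Rightarrow> real" where
  "Wop s v t = s - integral {-L..t} (\<lambda>r. aa r * FF (v r))"
definition Top :: "real \<Rightarrow> (real \<Rightarrow> real) \<Rightarrow> real \<Rightarrow> real" where
  "Top s v x = - m + integral {-L..x} (\<lambda>t. Wop s v t / aa t)"

lemma cl_in: "cl x \<in> {-L..L}" unfolding cl_def using L_pos by auto
lemma cl_id: "x \<in> {-L..L} \<Longrightarrow> cl x = x" unfolding cl_def by auto
lemma cl_cont: "continuous_on UNIV cl" unfolding cl_def by (intro continuous_intros)

lemma aa_cont: "continuous_on UNIV aa"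
proof -
  have "cl ` UNIV \<subseteq> {-L..L}" using cl_in by auto
  from continuous_on_compose2[OF a_cont cl_cont this] show ?thesis by (simp add: aa_def[abs_def])
qed

lemma aa_bounds: obtains \<alpha> \<beta> where "0 < \<alpha>" "\<And>x. \<alpha> \<le> aa x \<and> aa x \<le> \<beta>"
proof -
  obtain \<alpha> \<beta> where ab: "0 < \<alpha>" "\<forall>x\<in>{-L..L}. \<alpha> \<le> a x \<and> a x \<le> \<beta>" by (rule a_bounds)
  have "\<alpha> \<le> aa x \<and> aa x \<le> \<beta>" for x
  proof -
    have "cl x \<in> {-L..L}" by (rule cl_in)
    then show ?thesis using ab unfolding aa_def by blast
  qed
  then show ?thesis using ab by (intro that[of \<alpha> \<beta>]) auto
qed

lemma aa_pos: "aa x > 0"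
  using a_pos cl_in unfolding aa_def by auto

lemma aa_eq: "x \<in> {-L..L} \<Longrightarrow> aa x = a x" unfolding aa_def using cl_id by simp

lemma FF_cont: "continuous_on UNIV FF"
proof -
  have "continuous_on UNIV (\<lambda>y. max (-m) (min m y))" by (intro continuous_intros)
  then have "continuous_on UNIV (\<lambda>y. g (max (-m) (min m y)))" by (rule continuous_on_compose2[OF g_cont]) auto
  then show ?thesis unfolding FF_def[abs_def] by (intro continuous_intros)
qed

lemma FF_lip: obtains K where "K \<ge> 0" "\<And>p q. \<bar>FF p - FF q\<bar> \<le> K * \<bar>p - q\<bar>"
proof -
  obtain K where K: "K \<ge> 0" "\<And>x y. x \<in> {-m..m} \<Longrightarrow> y \<in> {-m..m} \<Longrightarrow> \<bar>g x - g y\<bar> \<le> K * \<bar>x - y\<bar>"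
    by (rule g_lip[where R=m]) blast
  show ?thesis
  proof (rule that[OF K(1)])
    fix p q
    define p' where "p' = max (-m) (min m p)"
    define q' where "q' = max (-m) (min m q)"
    have "p' \<in> {-m..m}" "q' \<in> {-m..m}" using m_pos unfolding p'_def q'_def by auto
    then have "\<bar>g p' - g q'\<bar> \<le> K * \<bar>p' - q'\<bar>" by (rule K(2))
    also have "\<dots> \<le> K * \<bar>p - q\<bar>"
      by (rule mult_left_mono[OF _ K(1)]) (auto simp: p'_def q'_def)
    finally show "\<bar>FF p - FF q\<bar> \<le> K * \<bar>p - q\<bar>" unfolding FF_def p'_def q'_def
      by (simp add: abs_minus_commute)
  qed
qed

lemma FF_bound: obtains B where "B \<ge> 0" "\<And>y. \<bar>FF y\<bar> \<le> B"
proof -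
  have "continuous_on {-m..m} g" using g_cont continuous_on_subset by blast
  then obtain B where B: "\<forall>x\<in>{-m..m}. \<bar>g x\<bar> \<le> B"
    using compact_continuous_image[OF _ compact_Icc] compact_imp_bounded bounded_iff
    by (metis (no_types, lifting) image_eqI real_norm_def)
  have "\<bar>FF y\<bar> \<le> B" for y
    using B[rule_format, of "max (-m) (min m y)"] m_pos unfolding FF_def by auto
  moreover have "B \<ge> 0" using B m_pos by force
  ultimately show ?thesis using that by blast
qed

lemma FF_eq: "y \<in> {-m..m} \<Longrightarrow> FF y = - g y" unfolding FF_def by auto

lemma FF_m: "FF y = 0" if "y \<ge> m \<or> y \<le> - m"
  using that g_m g_mm m_pos unfolding FF_def by auto

lemma Wop_cont: assumes "continuous_on {-L..L} v" shows "continuous_on {-L..L} (Wop s v)"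
proof -
  have "continuous_on {-L..L} (\<lambda>r. aa r * FF (v r))"
    using assms continuous_on_compose2[OF FF_cont assms] aa_cont
    by (auto intro!: continuous_intros intro: continuous_on_subset)
  from ind_int_cont[OF this] show ?thesis unfolding Wop_def[abs_def] by (intro continuous_intros)
qed

lemma Wop_deriv: assumes "continuous_on {-L..L} v" "x \<in> {-L<..<L}"
  shows "(Wop s v has_real_derivative - (a x * FF (v x))) (at x)"
proof -
  have c: "continuous_on {-L..L} (\<lambda>r. aa r * FF (v r))"
    using assms continuous_on_compose2[OF FF_cont assms(1)] aa_cont
    by (auto intro!: continuous_intros intro: continuous_on_subset)
  have "((\<lambda>t. s - integral {-L..t} (\<lambda>r. aa r * FF (v r))) has_real_derivative 0 - aa x * FF (v x)) (at x)"
    by (rule DERIV_diff[OF DERIV_const ind_int_deriv[OF c assms(2)]])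
  then show ?thesis unfolding Wop_def[abs_def] using aa_eq[of x] assms(2) by simp
qed

lemma Top_integrand_cont: assumes "continuous_on {-L..L} v"
  shows "continuous_on {-L..L} (\<lambda>t. Wop s v t / aa t)"
  using Wop_cont[OF assms] aa_cont aa_pos
  by (auto intro!: continuous_intros intro: continuous_on_subset simp: less_imp_neq[symmetric])

lemma Top_cont: assumes "continuous_on {-L..L} v" shows "continuous_on {-L..L} (Top s v)"
  using ind_int_cont[OF Top_integrand_cont[OF assms]] unfolding Top_def[abs_def] by (intro continuous_intros)

lemma Top_deriv: assumes "continuous_on {-L..L} v" "x \<in> {-L<..<L}"
  shows "(Top s v has_real_derivative Wop s v x / a x) (at x)"
proof -
  have "((\<lambda>x. - m + integral {-L..x} (\<lambda>t. Wop s v t / aa t)) has_real_derivative 0 + Wop s v x / aa x) (at x)"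
    by (rule DERIV_add[OF DERIV_const ind_int_deriv[OF Top_integrand_cont[OF assms(1)] assms(2)]])
  then show ?thesis unfolding Top_def[abs_def] using aa_eq[of x] assms(2) by simp
qed

end


context prob begin

definition vv :: "real \<Rightarrow> (real \<Rightarrow>\<^sub>C real) \<Rightarrow> real \<Rightarrow> real" where
  "vv lam \<phi> y = exp (lam * cl y) * apply_bcontfun \<phi> y"
definition Hf :: "real \<Rightarrow> real \<Rightarrow> (real \<Rightarrow>\<^sub>C real) \<Rightarrow> real \<Rightarrow> real" where
  "Hf lam s \<phi> y = Top s (vv lam \<phi>) y / exp (lam * y)"
definition Sop :: "real \<Rightarrow> real \<Rightarrow> (real \<Rightarrow>\<^sub>C real) \<Rightarrow> (real \<Rightarrow>\<^sub>C real)" where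
  "Sop lam s \<phi> = Bcontfun (\<lambda>x. Hf lam s \<phi> (cl x))"

lemma bc_comp: assumes "continuous_on {-L..L} H" shows "(\<lambda>x. H (cl x)) \<in> bcontfun"
proof -
  have r: "cl ` UNIV \<subseteq> {-L..L}" using cl_in by auto
  have "continuous_on UNIV (\<lambda>x. H (cl x))" by (rule continuous_on_compose2[OF assms cl_cont r])
  moreover have "bounded (range (\<lambda>x. H (cl x)))"
  proof -
    have "compact (H ` {-L..L})" by (rule compact_continuous_image[OF assms compact_Icc])
    then have "bounded (H ` {-L..L})" by (rule compact_imp_bounded)
    moreover have "range (\<lambda>x. H (cl x)) \<subseteq> H ` {-L..L}" using cl_in by auto
    ultimately show ?thesis by (rule bounded_subset)
  qed
  ultimately show ?thesis unfolding bcontfun_def by simp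
qed

lemma vv_cont: "continuous_on {-L..L} (vv lam \<phi>)"
proof -
  have "continuous_on UNIV (vv lam \<phi>)" unfolding vv_def[abs_def]
    by (intro continuous_intros cl_cont[THEN continuous_on_subset]) auto
  then show ?thesis by (rule continuous_on_subset) auto
qed

lemma Hf_cont: "continuous_on {-L..L} (Hf lam s \<phi>)"
  unfolding Hf_def[abs_def] by (intro continuous_intros Top_cont vv_cont) auto

lemma Sop_apply: "apply_bcontfun (Sop lam s \<phi>) x = Hf lam s \<phi> (cl x)"
  unfolding Sop_def using Bcontfun_inverse[OF bc_comp[OF Hf_cont[of lam s \<phi>]]] by simp

lemma Top_diff_bound:
  assumes K: "K \<ge> 0" "\<And>p q. \<bar>FF p - FF q\<bar> \<le> K * \<bar>p - q\<bar>"
    and ab: "0 < \<alpha>" "\<And>x. \<alpha> \<le> aa x \<and> aa x \<le> \<beta>" and lam: "lam > 0"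
    and c1: "continuous_on {-L..L} v1" and c2: "continuous_on {-L..L} v2" and d: "d \<ge> 0"
    and vb: "\<forall>r\<in>{-L..L}. \<bar>v1 r - v2 r\<bar> \<le> exp (lam * r) * d"
    and y: "y \<in> {-L..L}"
  shows "\<bar>Top s v1 y - Top s v2 y\<bar> \<le> \<beta> * K * d / (\<alpha> * lam) * exp (lam * y) / lam"
proof -
  have \<beta>: "\<beta> \<ge> \<alpha>" using ab(2)[of 0] by linarith
  have kc: "continuous_on {-L..L} (\<lambda>r. aa r * FF (v r))" if "continuous_on {-L..L} v" for v
    using that continuous_on_compose2[OF FF_cont that] aa_cont
    by (auto intro!: continuous_intros intro: continuous_on_subset)
  have Ib: "\<bar>Wop s v1 t - Wop s v2 t\<bar> \<le> \<beta> * K * d * exp (lam * t) / lam" if t: "t \<in> {-L..L}" for t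
  proof -
    have sub: "{-L..t} \<subseteq> {-L..L}" using t by auto
    have k1: "continuous_on {-L..t} (\<lambda>r. aa r * FF (v1 r))" using kc[OF c1] sub continuous_on_subset by blast
    have k2: "continuous_on {-L..t} (\<lambda>r. aa r * FF (v2 r))" using kc[OF c2] sub continuous_on_subset by blast
    have "Wop s v1 t - Wop s v2 t = - integral {-L..t} (\<lambda>r. aa r * FF (v1 r) - aa r * FF (v2 r))"
      unfolding Wop_def
      using integral_diff[OF integrable_continuous_real[OF k1] integrable_continuous_real[OF k2]] by simp
    moreover have "\<bar>integral {-L..t} (\<lambda>r. aa r * FF (v1 r) - aa r * FF (v2 r))\<bar> \<le> \<beta> * K * d * exp (lam * t) / lam"
    proof (rule exp_int_bound[OF lam])
      show "0 \<le> \<beta> * K * d" using K ab d \<beta> by simp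
      show "- L \<le> t" using t by simp
      show "continuous_on {-L..t} (\<lambda>r. aa r * FF (v1 r) - aa r * FF (v2 r))"
        by (rule continuous_on_diff[OF k1 k2])
      show "\<forall>r\<in>{-L..t}. \<bar>aa r * FF (v1 r) - aa r * FF (v2 r)\<bar> \<le> \<beta> * K * d * exp (lam * r)"
      proof
        fix r assume r: "r \<in> {-L..t}"
        have "\<bar>aa r * FF (v1 r) - aa r * FF (v2 r)\<bar> = aa r * \<bar>FF (v1 r) - FF (v2 r)\<bar>"
          using aa_pos[of r] by (simp add: abs_mult right_diff_distrib[symmetric])
        also have "\<dots> \<le> \<beta> * (K * (exp (lam * r) * d))"
        proof (rule mult_mono)
          show "aa r \<le> \<beta>" using ab(2) by blast
          have "\<bar>FF (v1 r) - FF (v2 r)\<bar> \<le> K * \<bar>v1 r - v2 r\<bar>" by (rule K(2))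
          also have "\<dots> \<le> K * (exp (lam * r) * d)" using vb r sub K(1) by (intro mult_left_mono) auto
          finally show "\<bar>FF (v1 r) - FF (v2 r)\<bar> \<le> K * (exp (lam * r) * d)" .
        qed (use ab \<beta> in auto)
        finally show "\<bar>aa r * FF (v1 r) - aa r * FF (v2 r)\<bar> \<le> \<beta> * K * d * exp (lam * r)"
          by (simp add: mult_ac)
      qed
    qed
    ultimately show ?thesis by simp
  qed
  have jc: "continuous_on {-L..y} (\<lambda>t. Wop s v t / aa t)" if "continuous_on {-L..L} v" for v
    using Top_integrand_cont[OF that] continuous_on_subset y by (metis atLeastAtMost_iff atLeastatMost_subset_iff order_refl)
  have "Top s v1 y - Top s v2 y = integral {-L..y} (\<lambda>t. Wop s v1 t / aa t - Wop s v2 t / aa t)"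
    unfolding Top_def
    using integral_diff[OF integrable_continuous_real[OF jc[OF c1]] integrable_continuous_real[OF jc[OF c2]]] by simp
  moreover have "\<bar>integral {-L..y} (\<lambda>t. Wop s v1 t / aa t - Wop s v2 t / aa t)\<bar>
      \<le> \<beta> * K * d / (\<alpha> * lam) * exp (lam * y) / lam"
  proof (rule exp_int_bound[OF lam])
    show "0 \<le> \<beta> * K * d / (\<alpha> * lam)" using K ab d \<beta> lam by simp
    show "- L \<le> y" using y by simp
    show "continuous_on {-L..y} (\<lambda>t. Wop s v1 t / aa t - Wop s v2 t / aa t)"
      by (rule continuous_on_diff[OF jc[OF c1] jc[OF c2]])
    show "\<forall>t\<in>{-L..y}. \<bar>Wop s v1 t / aa t - Wop s v2 t / aa t\<bar> \<le> \<beta> * K * d / (\<alpha> * lam) * exp (lam * t)"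
    proof
      fix t assume t: "t \<in> {-L..y}"
      then have tI: "t \<in> {-L..L}" using y by auto
      have ap: "aa t > 0" "\<alpha> \<le> aa t" using aa_pos ab by auto
      have "\<bar>Wop s v1 t / aa t - Wop s v2 t / aa t\<bar> = \<bar>Wop s v1 t - Wop s v2 t\<bar> / aa t"
        using ap by (simp add: diff_divide_distrib[symmetric])
      also have "\<dots> \<le> (\<beta> * K * d * exp (lam * t) / lam) / \<alpha>"
        by (rule frac_le) (use Ib[OF tI] ap ab K d \<beta> lam in auto)
      also have "\<dots> = \<beta> * K * d / (\<alpha> * lam) * exp (lam * t)" by (simp add: field_simps)
      finally show "\<bar>Wop s v1 t / aa t - Wop s v2 t / aa t\<bar> \<le> \<beta> * K * d / (\<alpha> * lam) * exp (lam * t)" .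
    qed
  qed
  ultimately show ?thesis by simp
qed

end


context prob begin

lemma Sop_contr:
  assumes K: "K \<ge> 0" "\<And>p q. \<bar>FF p - FF q\<bar> \<le> K * \<bar>p - q\<bar>"
    and ab: "0 < \<alpha>" "\<And>x. \<alpha> \<le> aa x \<and> aa x \<le> \<beta>" and lam: "lam > 0"
    and hc: "\<beta> * K / (\<alpha> * lam\<^sup>2) \<le> 1/2"
  shows "dist (Sop lam s \<phi>1) (Sop lam s \<phi>2) \<le> 1/2 * dist \<phi>1 \<phi>2"
proof (rule dist_bound)
  fix x
  define d where "d = dist \<phi>1 \<phi>2"
  define y where "y = cl x"
  have y: "y \<in> {-L..L}" unfolding y_def by (rule cl_in)
  have d0: "d \<ge> 0" unfolding d_def by simp
  have vb: "\<forall>r\<in>{-L..L}. \<bar>vv lam \<phi>1 r - vv lam \<phi>2 r\<bar> \<le> exp (lam * r) * d"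
  proof
    fix r assume r: "r \<in> {-L..L}"
    have "\<bar>vv lam \<phi>1 r - vv lam \<phi>2 r\<bar> = exp (lam * r) * \<bar>apply_bcontfun \<phi>1 r - apply_bcontfun \<phi>2 r\<bar>"
      unfolding vv_def cl_id[OF r] by (simp add: abs_mult right_diff_distrib[symmetric])
    also have "\<dots> \<le> exp (lam * r) * d"
      using dist_bounded[of \<phi>1 r \<phi>2] unfolding d_def dist_real_def by simp
    finally show "\<bar>vv lam \<phi>1 r - vv lam \<phi>2 r\<bar> \<le> exp (lam * r) * d" .
  qed
  have T: "\<bar>Top s (vv lam \<phi>1) y - Top s (vv lam \<phi>2) y\<bar> \<le> \<beta> * K * d / (\<alpha> * lam) * exp (lam * y) / lam"
    by (rule Top_diff_bound[OF K ab lam vv_cont vv_cont d0 vb y])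
  have "dist (Sop lam s \<phi>1 x) (Sop lam s \<phi>2 x) = \<bar>Top s (vv lam \<phi>1) y - Top s (vv lam \<phi>2) y\<bar> / exp (lam * y)"
    unfolding Sop_apply Hf_def y_def[symmetric] dist_real_def by (simp add: diff_divide_distrib[symmetric])
  also have "\<dots> \<le> (\<beta> * K * d / (\<alpha> * lam) * exp (lam * y) / lam) / exp (lam * y)"
    by (rule divide_right_mono[OF T]) simp
  also have "\<dots> = (\<beta> * K / (\<alpha> * lam\<^sup>2)) * d" using lam ab by (simp add: field_simps power2_eq_square)
  also have "\<dots> \<le> 1/2 * d" by (rule mult_right_mono[OF hc d0])
  finally show "dist (Sop lam s \<phi>1 x) (Sop lam s \<phi>2 x) \<le> 1/2 * dist \<phi>1 \<phi>2" unfolding d_def .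
qed

lemma Sop_param:
  assumes ab: "0 < \<alpha>" "\<And>x. \<alpha> \<le> aa x \<and> aa x \<le> \<beta>" and lam: "lam > 0"
  shows "dist (Sop lam s \<phi>) (Sop lam s' \<phi>) \<le> \<bar>s - s'\<bar> * exp (lam * L) / (\<alpha> * lam)"
proof (rule dist_bound)
  fix x
  define y where "y = cl x"
  have y: "y \<in> {-L..L}" unfolding y_def by (rule cl_in)
  define v where "v = vv lam \<phi>"
  have jc: "continuous_on {-L..y} (\<lambda>t. Wop s v t / aa t)" for s
    using Top_integrand_cont[OF vv_cont, of s lam \<phi>] continuous_on_subset y unfolding v_def
    by (metis atLeastAtMost_iff atLeastatMost_subset_iff order_refl)
  define C where "C = \<bar>s - s'\<bar> * exp (lam * L) / \<alpha>"
  have "Top s v y - Top s' v y = integral {-L..y} (\<lambda>t. Wop s v t / aa t - Wop s' v t / aa t)"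
    unfolding Top_def
    using integral_diff[OF integrable_continuous_real[OF jc] integrable_continuous_real[OF jc]] by simp
  moreover have "\<bar>integral {-L..y} (\<lambda>t. Wop s v t / aa t - Wop s' v t / aa t)\<bar> \<le> C * exp (lam * y) / lam"
  proof (rule exp_int_bound[OF lam])
    show "0 \<le> C" unfolding C_def using ab by simp
    show "- L \<le> y" using y by simp
    show "continuous_on {-L..y} (\<lambda>t. Wop s v t / aa t - Wop s' v t / aa t)"
      by (rule continuous_on_diff[OF jc jc])
    show "\<forall>t\<in>{-L..y}. \<bar>Wop s v t / aa t - Wop s' v t / aa t\<bar> \<le> C * exp (lam * t)"
    proof
      fix t assume t: "t \<in> {-L..y}"
      have ap: "aa t > 0" "\<alpha> \<le> aa t" using aa_pos ab by auto
      have "\<bar>Wop s v t / aa t - Wop s' v t / aa t\<bar> = \<bar>s - s'\<bar> / aa t"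
        unfolding Wop_def using ap by (simp add: diff_divide_distrib[symmetric])
      also have "\<dots> \<le> \<bar>s - s'\<bar> / \<alpha>" by (rule divide_left_mono) (simp_all add: ap(2) mult_pos_pos[OF ap(1) ab(1)])
      also have "\<dots> \<le> \<bar>s - s'\<bar> / \<alpha> * (exp (lam * L) * exp (lam * t))"
      proof -
        have "exp (lam * L) * exp (lam * t) = exp (lam * (L + t))" by (simp add: exp_add[symmetric] algebra_simps)
        also have "\<dots> \<ge> 1" using t lam by auto
        finally have "exp (lam * L) * exp (lam * t) \<ge> 1" .
        moreover have "\<bar>s - s'\<bar> / \<alpha> \<ge> 0" using ab by simp
        ultimately show ?thesis using mult_left_mono[of 1 "exp (lam * L) * exp (lam * t)" "\<bar>s - s'\<bar> / \<alpha>"]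
          by simp
      qed
      also have "\<dots> = C * exp (lam * t)" unfolding C_def by simp
      finally show "\<bar>Wop s v t / aa t - Wop s' v t / aa t\<bar> \<le> C * exp (lam * t)" .
    qed
  qed
  ultimately have T: "\<bar>Top s v y - Top s' v y\<bar> \<le> C * exp (lam * y) / lam" by simp
  have "dist (Sop lam s \<phi> x) (Sop lam s' \<phi> x) = \<bar>Top s v y - Top s' v y\<bar> / exp (lam * y)"
    unfolding Sop_apply Hf_def y_def[symmetric] dist_real_def v_def by (simp add: diff_divide_distrib[symmetric])
  also have "\<dots> \<le> (C * exp (lam * y) / lam) / exp (lam * y)"
    by (rule divide_right_mono[OF T]) simp
  also have "\<dots> = \<bar>s - s'\<bar> * exp (lam * L) / (\<alpha> * lam)" unfolding C_def by simp
  finally show "dist (Sop lam s \<phi> x) (Sop lam s' \<phi> x) \<le> \<bar>s - s'\<bar> * exp (lam * L) / (\<alpha> * lam)" .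
qed

definition fp :: "real \<Rightarrow> real \<Rightarrow> (real \<Rightarrow>\<^sub>C real)" where
  "fp lam s = (THE \<phi>. Sop lam s \<phi> = \<phi>)"

lemma fp_fix:
  assumes "\<And>s \<phi>1 \<phi>2. dist (Sop lam s \<phi>1) (Sop lam s \<phi>2) \<le> 1/2 * dist \<phi>1 \<phi>2"
  shows "Sop lam s (fp lam s) = fp lam s"
proof -
  have "\<exists>!\<phi>. Sop lam s \<phi> = \<phi>"
    by (rule banach_fix_type[of "1/2"]) (use assms in auto)
  then show ?thesis unfolding fp_def by (rule theI')
qed

end


context prob begin

lemma ext_const:
  assumes c: "continuous_on {-L..L} u" and o: "ode u w FF"
    and x0: "x0 \<in> {-L<..<L}" and w0: "w x0 = 0" and F0: "FF (u x0) = 0"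
  shows "u L = u x0"
proof -
  obtain K where K: "K \<ge> 0" "\<And>p q. \<bar>FF p - FF q\<bar> \<le> K * \<bar>p - q\<bar>" by (rule FF_lip) blast
  have oc: "ode (\<lambda>_. u x0) (\<lambda>_. 0) FF" unfolding ode_def using F0 by (auto intro!: derivative_eq_intros)
  have eq: "u x = u x0" if x: "x \<in> {-L<..<L}" for x
    using ivp_unique[OF o oc _ K(1) x0 _ _ x] K(2) w0 by auto
  show ?thesis
    by (rule continuous_constant_on_closure[of "{-L<..<L}"]) (use c eq L_pos in auto)
qed

lemma clamp:
  assumes c: "continuous_on {-L..L} u" and bL: "u L = m" "u (-L) = - m" and o: "ode u w FF"
    and x: "x \<in> {-L..L}"
  shows "- m \<le> u x \<and> u x \<le> m"
proof -
  have ne: "{-L..L} \<noteq> {}" using L_pos by simp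
  have interior: "xM \<in> {-L<..<L}" if "xM \<in> {-L..L}" "u xM \<noteq> m" "u xM \<noteq> - m" for xM
    using that bL by (cases "xM = L"; cases "xM = -L") auto
  have nbhd: "\<forall>y. \<bar>xM - y\<bar> < min (xM + L) (L - xM) \<longrightarrow> y \<in> {-L..L}" for xM by auto
  have dpos: "min (xM + L) (L - xM) > 0" if "xM \<in> {-L<..<L}" for xM using that by auto
  obtain xM where xM: "xM \<in> {-L..L}" "\<forall>y\<in>{-L..L}. u y \<le> u xM"
    using continuous_attains_sup[OF compact_Icc ne c] by blast
  obtain xm where xm: "xm \<in> {-L..L}" "\<forall>y\<in>{-L..L}. u xm \<le> u y"
    using continuous_attains_inf[OF compact_Icc ne c] by blast
  have "u xM \<le> m"
  proof (rule ccontr)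
    assume "\<not> u xM \<le> m"
    then have gt: "u xM > m" by simp
    then have xi: "xM \<in> {-L<..<L}" using interior[OF xM(1)] m_pos by auto
    have d: "(u has_real_derivative w xM / a xM) (at xM)" using o xi unfolding ode_def by auto
    have "w xM / a xM = 0"
      by (rule DERIV_local_max[OF d dpos[OF xi]]) (use xM(2) nbhd[of xM] in blast)
    then have "w xM = 0" using apos_open[OF xi] by simp
    moreover have "FF (u xM) = 0" using FF_m gt by auto
    ultimately have "u L = u xM" by (rule ext_const[OF c o xi])
    then show False using bL gt by simp
  qed
  moreover have "u xm \<ge> - m"
  proof (rule ccontr)
    assume "\<not> u xm \<ge> - m"
    then have lt: "u xm < - m" by simp
    then have xi: "xm \<in> {-L<..<L}" using interior[OF xm(1)] m_pos by auto
    have d: "(u has_real_derivative w xm / a xm) (at xm)" using o xi unfolding ode_def by auto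
    have "w xm / a xm = 0"
      by (rule DERIV_local_min[OF d dpos[OF xi]]) (use xm(2) nbhd[of xm] in blast)
    then have "w xm = 0" using apos_open[OF xi] by simp
    moreover have "FF (u xm) = 0" using FF_m lt by auto
    ultimately have "u L = u xm" by (rule ext_const[OF c o xi])
    then show False using bL lt m_pos by simp
  qed
  ultimately show ?thesis using xM(2) xm(2) x by force
qed

end


context prob begin

lemma Wop_bound:
  assumes B: "B \<ge> 0" "\<And>y. \<bar>FF y\<bar> \<le> B" and ab: "\<And>x. 0 < aa x \<and> aa x \<le> \<beta>"
    and v: "continuous_on {-L..L} v" and t: "t \<in> {-L..L}"
  shows "\<bar>Wop s v t - s\<bar> \<le> 2 * L * \<beta> * B"
proof -
  have kc: "continuous_on {-L..t} (\<lambda>r. aa r * FF (v r))"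
  proof -
    have "continuous_on {-L..L} (\<lambda>r. aa r * FF (v r))"
      using continuous_on_compose2[OF FF_cont v] aa_cont
      by (auto intro!: continuous_intros intro: continuous_on_subset)
    then show ?thesis by (rule continuous_on_subset) (use t in auto)
  qed
  have "norm (integral {-L..t} (\<lambda>r. aa r * FF (v r))) \<le> integral {-L..t} (\<lambda>_. \<beta> * B)"
  proof (rule integral_norm_bound_integral)
    show "(\<lambda>r. aa r * FF (v r)) integrable_on {-L..t}" by (rule integrable_continuous_real[OF kc])
    show "(\<lambda>_. \<beta> * B) integrable_on {-L..t}" by (rule integrable_continuous_real) simp
    fix r assume "r \<in> {-L..t}"
    have "\<bar>aa r * FF (v r)\<bar> = aa r * \<bar>FF (v r)\<bar>" using ab[of r] by (simp add: abs_mult)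
    also have "\<dots> \<le> \<beta> * B" by (rule mult_mono) (use ab[of r] B in auto)
    finally show "norm (aa r * FF (v r)) \<le> \<beta> * B" by simp
  qed
  also have "\<dots> = (t + L) * (\<beta> * B)" using t by simp
  also have "\<dots> \<le> (2 * L) * (\<beta> * B)"
    by (rule mult_right_mono) (use t ab[of 0] B in auto)
  finally show ?thesis unfolding Wop_def by simp
qed

lemma exists_sol: "\<exists>u w. sol u w"
proof -
  obtain K where K: "K \<ge> 0" "\<And>p q. \<bar>FF p - FF q\<bar> \<le> K * \<bar>p - q\<bar>" by (rule FF_lip) blast
  obtain \<alpha> \<beta> where ab: "0 < \<alpha>" "\<And>x. \<alpha> \<le> aa x \<and> aa x \<le> \<beta>" by (rule aa_bounds) blast
  obtain B where B: "B \<ge> 0" "\<And>y. \<bar>FF y\<bar> \<le> B" by (rule FF_bound) blast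
  have \<beta>: "\<beta> \<ge> \<alpha>" using ab(2)[of 0] by linarith
  define q where "q = 2 * \<beta> * K / \<alpha>"
  have q0: "q \<ge> 0" unfolding q_def using ab \<beta> K by simp
  define lam where "lam = sqrt q + 1"
  have lam: "lam > 0" unfolding lam_def using real_sqrt_ge_zero[OF q0] by linarith
  have hc: "\<beta> * K / (\<alpha> * lam\<^sup>2) \<le> 1/2"
  proof -
    have "sqrt q \<le> lam" unfolding lam_def by simp
    then have "(sqrt q)\<^sup>2 \<le> lam\<^sup>2" by (rule power_mono) (use q0 in simp)
    then have "q \<le> lam\<^sup>2" using q0 by simp
    then have "\<alpha> * q \<le> \<alpha> * lam\<^sup>2" using ab by simp
    then have "2 * \<beta> * K \<le> \<alpha> * lam\<^sup>2" unfolding q_def using ab by simp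
    moreover have "\<alpha> * lam\<^sup>2 > 0" using ab lam by simp
    ultimately show ?thesis by (simp add: divide_le_eq)
  qed
  have contr: "\<And>s \<phi>1 \<phi>2. dist (Sop lam s \<phi>1) (Sop lam s \<phi>2) \<le> 1/2 * dist \<phi>1 \<phi>2"
    by (rule Sop_contr[OF K ab lam hc])
  define M where "M = exp (lam * L) / (\<alpha> * lam)"
  have M0: "M \<ge> 0" unfolding M_def using ab lam by simp
  have fixp: "\<And>s. Sop lam s (fp lam s) = fp lam s" by (rule fp_fix[OF contr])
  have fpd: "dist (fp lam s) (fp lam s') \<le> 2 * M * \<bar>s - s'\<bar>" for s s'
  proof -
    have "dist (fp lam s) (fp lam s') = dist (Sop lam s (fp lam s)) (Sop lam s' (fp lam s'))"
      using fixp by simp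
    also have "\<dots> \<le> dist (Sop lam s (fp lam s)) (Sop lam s (fp lam s')) + dist (Sop lam s (fp lam s')) (Sop lam s' (fp lam s'))"
      by (rule dist_triangle)
    also have "\<dots> \<le> 1/2 * dist (fp lam s) (fp lam s') + M * \<bar>s - s'\<bar>"
    proof (rule add_mono)
      show "dist (Sop lam s (fp lam s)) (Sop lam s (fp lam s')) \<le> 1/2 * dist (fp lam s) (fp lam s')"
        by (rule contr)
      show "dist (Sop lam s (fp lam s')) (Sop lam s' (fp lam s')) \<le> M * \<bar>s - s'\<bar>"
        using Sop_param[OF ab lam, of s "fp lam s'" s'] unfolding M_def by (simp add: mult_ac)
    qed
    finally show ?thesis by simp
  qed
  define V where "V s = vv lam (fp lam s)" for s
  have Vc: "continuous_on {-L..L} (V s)" for s unfolding V_def by (rule vv_cont)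
  have VT: "V s x = Top s (V s) x" if x: "x \<in> {-L..L}" for s x
  proof -
    have "V s x = exp (lam * x) * apply_bcontfun (fp lam s) x" unfolding V_def vv_def using cl_id[OF x] by simp
    also have "apply_bcontfun (fp lam s) x = apply_bcontfun (Sop lam s (fp lam s)) x" using fixp by simp
    also have "\<dots> = Top s (V s) x / exp (lam * x)" unfolding Sop_apply Hf_def V_def cl_id[OF x] ..
    finally show ?thesis by simp
  qed
  have LI: "L \<in> {-L..L}" "-L \<in> {-L..L}" using L_pos by auto
  define \<Phi> where "\<Phi> s = V s L" for s
  have \<Phi>c: "continuous_on {a0..b0} \<Phi>" for a0 b0
  proof -
    have "(exp (lam * L) * (2 * M))-lipschitz_on UNIV \<Phi>"
    proof (rule lipschitz_onI)
      fix s s' :: real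
      have "dist (\<Phi> s) (\<Phi> s') = exp (lam * L) * dist (apply_bcontfun (fp lam s) L) (apply_bcontfun (fp lam s') L)"
        unfolding \<Phi>_def V_def vv_def cl_id[OF LI(1)] dist_real_def
        by (simp add: abs_mult right_diff_distrib[symmetric])
      also have "\<dots> \<le> exp (lam * L) * dist (fp lam s) (fp lam s')"
        by (rule mult_left_mono[OF dist_bounded]) simp
      also have "\<dots> \<le> exp (lam * L) * (2 * M * \<bar>s - s'\<bar>)"
        by (rule mult_left_mono[OF fpd]) simp
      finally show "dist (\<Phi> s) (\<Phi> s') \<le> exp (lam * L) * (2 * M) * dist s s'"
        by (simp add: dist_real_def mult_ac)
      show "0 \<le> exp (lam * L) * (2 * M)" using M0 by simp
    qed
    then have "continuous_on UNIV \<Phi>" by (rule lipschitz_on_continuous_on)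
    then show ?thesis by (rule continuous_on_subset) simp
  qed
  define C0 where "C0 = 2 * L * \<beta> * B"
  have C0: "C0 \<ge> 0" unfolding C0_def using L_pos ab \<beta> B by simp
  have ab': "\<And>x. 0 < aa x \<and> aa x \<le> \<beta>" using ab aa_pos by auto
  have Wb: "\<bar>Wop s (V s) t - s\<bar> \<le> C0" if "t \<in> {-L..L}" for s t
    unfolding C0_def by (rule Wop_bound[OF B ab' Vc that])
  have \<Phi>I: "\<Phi> s = - m + integral {-L..L} (\<lambda>t. Wop s (V s) t / aa t)" for s
    unfolding \<Phi>_def using VT[OF LI(1)] Top_def by simp
  have icont: "(\<lambda>t. Wop s (V s) t / aa t) integrable_on {-L..L}" for s
    by (rule integrable_continuous_real[OF Top_integrand_cont[OF Vc]])
  define sp where "sp = C0 + m * \<beta> / L"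
  have "\<Phi> sp \<ge> m"
  proof -
    have "integral {-L..L} (\<lambda>_. m / L) \<le> integral {-L..L} (\<lambda>t. Wop sp (V sp) t / aa t)"
    proof (rule integral_le)
      show "(\<lambda>_. m / L) integrable_on {-L..L}" by (rule integrable_continuous_real) simp
      show "(\<lambda>t. Wop sp (V sp) t / aa t) integrable_on {-L..L}" by (rule icont)
      fix t assume t: "t \<in> {-L..L}"
      have W: "Wop sp (V sp) t \<ge> m * \<beta> / L" using Wb[OF t, of sp] unfolding sp_def abs_le_iff by linarith
      have mb: "m * \<beta> / L > 0" using m_pos L_pos ab \<beta> by simp
      have "m / L = (m * \<beta> / L) / \<beta>" using ab \<beta> by simp
      also have "\<dots> \<le> Wop sp (V sp) t / \<beta>" by (rule divide_right_mono[OF W]) (use ab \<beta> in simp)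
      also have "\<dots> \<le> Wop sp (V sp) t / aa t"
        by (rule divide_left_mono) (use W mb ab'[of t] in \<open>auto intro: mult_pos_pos\<close>)
      finally show "m / L \<le> Wop sp (V sp) t / aa t" .
    qed
    moreover have "integral {-L..L} (\<lambda>_. m / L) = 2 * m" using L_pos by simp
    ultimately show ?thesis using \<Phi>I[of sp] by simp
  qed
  define sm where "sm = - C0"
  have "\<Phi> sm \<le> m"
  proof -
    have "integral {-L..L} (\<lambda>t. Wop sm (V sm) t / aa t) \<le> integral {-L..L} (\<lambda>_. 0::real)"
    proof (rule integral_le)
      show "(\<lambda>_. 0::real) integrable_on {-L..L}" by (rule integrable_continuous_real) simp
      show "(\<lambda>t. Wop sm (V sm) t / aa t) integrable_on {-L..L}" by (rule icont)
      fix t assume t: "t \<in> {-L..L}"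
      have W: "Wop sm (V sm) t \<le> 0" using Wb[OF t, of sm] unfolding sm_def abs_le_iff by linarith
      then show "Wop sm (V sm) t / aa t \<le> 0" using aa_pos[of t] by (simp add: divide_nonpos_pos)
    qed
    then show ?thesis using \<Phi>I[of sm] m_pos by simp
  qed
  moreover have "sm \<le> sp" unfolding sm_def sp_def using C0 m_pos L_pos ab \<beta> by simp
  ultimately obtain s0 where s0: "\<Phi> s0 = m"
    using IVT'[where f=\<Phi> and a=sm and b=sp and y=m] \<open>\<Phi> sp \<ge> m\<close> \<Phi>c by blast
  define v where "v = V s0"
  define u where "u = Top s0 v"
  define w where "w = Wop s0 v"
  have uv: "u x = v x" if "x \<in> {-L..L}" for x unfolding u_def v_def using VT[OF that] by simp
  have cu: "continuous_on {-L..L} u" unfolding u_def v_def by (rule Top_cont[OF Vc])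
  have uL: "u L = m" using uv[OF LI(1)] s0 unfolding \<Phi>_def v_def by simp
  have umL: "u (-L) = - m" unfolding u_def Top_def by simp
  have oFF: "ode u w FF" unfolding ode_def
  proof
    fix x assume x: "x \<in> {-L<..<L}"
    have "(u has_real_derivative w x / a x) (at x)"
      unfolding u_def w_def v_def by (rule Top_deriv[OF Vc x])
    moreover have "(w has_real_derivative - (a x * FF (u x))) (at x)"
      using Wop_deriv[OF Vc x, of s0] uv[of x] x unfolding w_def v_def by simp
    ultimately show "(u has_real_derivative w x / a x) (at x) \<and> (w has_real_derivative - (a x * FF (u x))) (at x)"
      by simp
  qed
  have o: "ode u w (\<lambda>x. - g x)" unfolding ode_def
  proof
    fix x assume x: "x \<in> {-L<..<L}"
    then have xI: "x \<in> {-L..L}" by simp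
    have "u x \<in> {-m..m}" using clamp[OF cu uL umL oFF xI] by simp
    then have e: "FF (u x) = - g (u x)" by (rule FF_eq)
    have "(u has_real_derivative w x / a x) (at x) \<and> (w has_real_derivative - (a x * FF (u x))) (at x)"
      using oFF x unfolding ode_def by blast
    then show "(u has_real_derivative w x / a x) (at x) \<and> (w has_real_derivative - (a x * - g (u x))) (at x)"
      unfolding e .
  qed
  have "sol u w" unfolding sol_def using cu uL umL o by simp
  then show ?thesis by blast
qed

end

theorem theorem1p2:
  fixes L m :: real and a a' G g :: "real \<Rightarrow> real"
  assumes L_pos: "L > 0" and m_pos: "m > 0"
    and a_pos: "\<forall>x\<in>{-L..L}. a x > 0"
    and a_even: "\<forall>x\<in>{-L..L}. a (- x) = a x"
    and a_deriv: "\<forall>x\<in>{-L..L}. (a has_real_derivative a' x) (at x within {-L..L})"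
    and a'_cont: "continuous_on {-L..L} a'"
    and G_nonneg: "\<forall>x. G x \<ge> 0"
    and G_even: "\<forall>x. G (- x) = G x"
    and G_deriv: "\<forall>x. (G has_real_derivative g x) (at x)"
    and g_cont: "continuous_on UNIV g"
    and f_lip: "loc_lipschitz (\<lambda>x. - g x)"
    and a'_nonneg: "\<forall>x\<in>{0<..<L}. a' x \<ge> 0"
    and G_min: "\<forall>x>0. G x \<ge> G m"
    and g_nonpos: "\<forall>x\<in>{0<..<m}. g x \<le> 0"
  shows "(\<exists>u. is_solution L m a (\<lambda>x. - g x) u \<and>
              (\<forall>v. is_solution L m a (\<lambda>x. - g x) v \<longrightarrow> (\<forall>x\<in>{-L..L}. v x = u x))) \<and>
         (\<forall>u. is_solution L m a (\<lambda>x. - g x) u \<longrightarrow>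
              (\<forall>x\<in>{-L..L}. u (- x) = - u x) \<and> strict_mono_on {-L..L} u)"
proof -
  interpret prob L m a a' G g
    by unfold_locales (use L_pos m_pos a_pos a_even a_deriv G_deriv G_even g_cont f_lip a'_nonneg G_min g_nonpos in auto)
  obtain u w where s: "sol u w" using exists_sol by blast
  have part1: "\<exists>u. is_solution L m a (\<lambda>x. - g x) u \<and>
              (\<forall>v. is_solution L m a (\<lambda>x. - g x) v \<longrightarrow> (\<forall>x\<in>{-L..L}. v x = u x))"
  proof (intro exI conjI allI impI ballI)
    show "is_solution L m a (\<lambda>x. - g x) u" by (rule sol_is[OF s])
    fix v x assume v: "is_solution L m a (\<lambda>x. - g x) v" and x: "x \<in> {-L..L}"
    obtain wv where sv: "sol v wv" using is_sol[OF v] by blast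
    show "v x = u x" by (rule uniq[OF sv s x])
  qed
  have part2: "(\<forall>x\<in>{-L..L}. u (- x) = - u x) \<and> strict_mono_on {-L..L} u"
    if v: "is_solution L m a (\<lambda>x. - g x) u" for u
  proof -
    obtain w where sv: "sol u w" using is_sol[OF v] by blast
    have sr: "sol (\<lambda>x. - u (- x)) (\<lambda>x. w (- x))" by (rule sol_reflect[OF sv])
    have "\<forall>x\<in>{-L..L}. u (- x) = - u x"
    proof
      fix x assume x: "x \<in> {-L..L}"
      have "- u (- x) = u x" using uniq[OF sr sv x] by simp
      then show "u (- x) = - u x" by simp
    qed
    moreover have "strict_mono_on {-L..L} u" by (rule sol_mono[OF sv])
    ultimately show ?thesis by simp
  qed
  show ?thesis using part1 part2 by blast
qed

end
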